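(* Let $c_i,\alpha_j\in\mathbb Z$. The Riordan array $$(g,f)=\Bigl(1+\sum_{i\ge1}c_it^i,\ t\bigl(1+\alpha_1t+\alpha_2t^2+\cdots+\alpha_6t^6+O(t^7)\bigr)\Bigr)\in S\mathcal R(\mathbb Z)$$ belongs to $[S\mathcal R(\mathbb Z),S\mathcal R(\mathbb Z)]$ if and only if $c_1=0$, $\alpha_1=\alpha_2=0$, and $\alpha_3\equiv\alpha_4\equiv\alpha_6\pmod 2$. In particular, $$S\mathcal R(\mathbb Z)^{ab}\cong\mathbb Z^3\times(\mathbb Z_2)^2.$$
   Context: $S\mathcal R(\mathbb Z)$ is the group of Riordan arrays $(g,f)$ with $g=1+\sum_{i\ge1}c_it^i$, $f=t+\sum_{k\ge2}f_kt^k$ in $\mathbb Z[[t]]$, identified with lower triangular matrices $(d_{n,k})$, $d_{n,k}=[t^n]gf^k$, with product $(g_1,f_1)(g_2,f_2)=(g_1\cdot(g_2\circ f_1),\,f_2\circ f_1)$. Here $[S\mathcal R(\mathbb Z),S\mathcal R(\mathbb Z)]$ denotes the topological commutator subgroup: the set of limits of finite products of commutators $x^{-1}y^{-1}xy$, in the topology of formal power series ($t$-adic, coefficientwise convergence: a sequence converges if for each $n$ its coefficients of $t^0,\dots,t^n$ in both components eventually agree with those of the limit); $S\mathcal R(\mathbb Z)^{ab}$ is the quotient by this subgroup. $\mathbb Z_2=\mathbb Z/2\mathbb Z$. *)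

theory Defs
  imports "HOL-Algebra.Algebra" "HOL-Computational_Algebra.Formal_Power_Series"
begin

definition SR_carrier :: "(int fps \<times> int fps) set" where
  "SR_carrier = {(g, f). fps_nth g 0 = 1 \<and> fps_nth f 0 = 0 \<and> fps_nth f 1 = 1}"

definition SR_mult :: "int fps \<times> int fps \<Rightarrow> int fps \<times> int fps \<Rightarrow> int fps \<times> int fps" where
  "SR_mult x y = (fst x * (fst y oo snd x), snd y oo snd x)"

definition SR :: "(int fps \<times> int fps) monoid" where
  "SR = \<lparr>carrier = SR_carrier, monoid.mult = SR_mult, one = (1, fps_X)\<rparr>"

definition tadic_conv :: "(nat \<Rightarrow> int fps \<times> int fps) \<Rightarrow> int fps \<times> int fps \<Rightarrow> bool" where
  "tadic_conv s x \<longleftrightarrow>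
     (\<forall>n. \<exists>K. \<forall>k\<ge>K. \<forall>i\<le>n.
        fps_nth (fst (s k)) i = fps_nth (fst x) i \<and> fps_nth (snd (s k)) i = fps_nth (snd x) i)"

definition SR_comm :: "(int fps \<times> int fps) set" where
  "SR_comm = generate SR {inv\<^bsub>SR\<^esub> x \<otimes>\<^bsub>SR\<^esub> inv\<^bsub>SR\<^esub> y \<otimes>\<^bsub>SR\<^esub> x \<otimes>\<^bsub>SR\<^esub> y | x y.
                            x \<in> carrier SR \<and> y \<in> carrier SR}"

definition SR_top_comm :: "(int fps \<times> int fps) set" where
  "SR_top_comm = {x. \<exists>s. (\<forall>k. s k \<in> SR_comm) \<and> tadic_conv s x}"

end

theory Submission
  imports Defs
begin
unbundle fps_syntax

lemma carrier_SR_iff: "x \<in> carrier SR \<longleftrightarrow> fst x $ 0 = 1 \<and> snd x $ 0 = 0 \<and> snd x $ 1 = 1"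
  by (cases x) (simp add: SR_def SR_carrier_def)

lemma SR_mult_eq: "x \<otimes>\<^bsub>SR\<^esub> y = (fst x * (fst y oo snd x), snd y oo snd x)"
  by (simp add: SR_def SR_mult_def)

lemma SR_one_eq: "\<one>\<^bsub>SR\<^esub> = (1, fps_X)"
  by (simp add: SR_def)

fun cinv :: "int fps \<Rightarrow> nat \<Rightarrow> int" where
  "cinv a 0 = 0"
| "cinv a (Suc n) = fps_X $ Suc n - (\<Sum>i=0..n. cinv a i * (a^i) $ Suc n)"

definition "finv a = Abs_fps (cinv a)"

lemma finv_left:
  assumes a0: "a$0 = 0" and a1: "a$1 = 1"
  shows "finv a oo a = fps_X"
proof -
  let ?i = "finv a oo a"
  have "?i $n = fps_X$n" for n
  proof (cases n)
    case 0
    then show ?thesis using a0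
      by (simp add: fps_compose_nth finv_def)
  next
    case (Suc n1)
    have "?i $ n = (\<Sum>i=0..n1. (finv a $ i) * (a^i)$n) + finv a $ Suc n1 * (a $ 1)^ Suc n1"
      by (simp only: fps_compose_nth) (simp add: Suc startsby_zero_power_nth_same [OF a0] del: power_Suc)
    also have "\<dots> = (\<Sum>i=0..n1. (finv a $ i) * (a^i)$n) +
        (fps_X$ Suc n1 - (\<Sum>i=0..n1. (finv a $ i) * (a^i)$n))"
      using a1 Suc by (simp add: finv_def)
    also have "\<dots> = fps_X$n" using Suc by simp
    finally show ?thesis .
  qed
  then show ?thesis by (simp add: fps_eq_iff)
qed

lemma finv_0: "finv a $ 0 = 0" by (simp add: finv_def)
lemma finv_1: "finv a $ Suc 0 = 1"
  unfolding finv_def by simp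

lemma finv_right:
  assumes a0: "a$0 = 0" and a1: "a$1 = 1"
  shows "a oo finv a = fps_X"
proof -
  let ?h = "finv a"
  let ?k = "finv ?h"
  have hk: "?k oo ?h = fps_X" by (rule finv_left) (simp_all add: finv_0 finv_1)
  have "?k = ?k oo (?h oo a)" by (simp add: finv_left[OF a0 a1])
  also have "\<dots> = (?k oo ?h) oo a" by (rule fps_compose_assoc) (simp_all add: a0 finv_0)
  also have "\<dots> = a" using hk a0 by simp
  finally have "?k = a" .
  then show ?thesis using hk by simp
qed

lemma compose_nth1: "f $ 0 = 0 \<Longrightarrow> (g oo f) $ Suc 0 = g $ 1 * f $ 1"
  by (simp add: fps_compose_nth)

lemma group_SR: "group SR"
proof (rule groupI)
  fix x y assume "x \<in> carrier SR" "y \<in> carrier SR"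
  then show "x \<otimes>\<^bsub>SR\<^esub> y \<in> carrier SR"
    by (simp add: carrier_SR_iff SR_mult_eq compose_nth1)
next
  show "\<one>\<^bsub>SR\<^esub> \<in> carrier SR" by (simp add: carrier_SR_iff SR_one_eq)
next
  fix x y z assume xyz: "x \<in> carrier SR" "y \<in> carrier SR" "z \<in> carrier SR"
  have a: "(fst y * (fst z oo snd y)) oo snd x = (fst y oo snd x) * (fst z oo (snd y oo snd x))"
    using xyz by (simp add: carrier_SR_iff fps_compose_mult_distrib fps_compose_assoc)
  have b: "snd z oo (snd y oo snd x) = (snd z oo snd y) oo snd x"
    using xyz by (simp add: carrier_SR_iff fps_compose_assoc)
  show "x \<otimes>\<^bsub>SR\<^esub> y \<otimes>\<^bsub>SR\<^esub> z = x \<otimes>\<^bsub>SR\<^esub> (y \<otimes>\<^bsub>SR\<^esub> z)"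
    by (simp add: SR_mult_eq a b mult.assoc)
next
  fix x assume "x \<in> carrier SR"
  then show "\<one>\<^bsub>SR\<^esub> \<otimes>\<^bsub>SR\<^esub> x = x" by (simp add: SR_mult_eq SR_one_eq carrier_SR_iff)
next
  fix x assume x: "x \<in> carrier SR"
  define f' where "f' = finv (snd x)"
  have f'0: "f' $ 0 = 0" and f'1: "f' $ Suc 0 = 1" by (simp_all add: f'_def finv_0 finv_1)
  have ff: "snd x oo f' = fps_X" using x by (simp add: f'_def finv_right carrier_SR_iff)
  have "(fst x oo f') $ 0 = 1" using x by (simp add: carrier_SR_iff)
  then obtain k where k: "1 = (fst x oo f') * k"
    using fps_is_left_unit_iff_zeroth_is_left_unit[of "fst x oo f'"] by auto
  have k0: "k $ 0 = 1"
  proof -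
    have "(1::int fps) $ 0 = ((fst x oo f') * k) $ 0" using k by simp
    then show ?thesis using \<open>(fst x oo f') $ 0 = 1\<close> by simp
  qed
  show "\<exists>y\<in>carrier SR. y \<otimes>\<^bsub>SR\<^esub> x = \<one>\<^bsub>SR\<^esub>"
    by (rule bexI[of _ "(k, f')"]) (simp_all add: SR_mult_eq SR_one_eq carrier_SR_iff k0 f'0 f'1 ff k mult.commute)
qed


interpretation G: group SR by (rule group_SR)

definition agree :: "nat \<Rightarrow> int fps \<Rightarrow> int fps \<Rightarrow> bool" where
  "agree n a b \<longleftrightarrow> (\<forall>i\<le>n. a $ i = b $ i)"

definition eqn :: "nat \<Rightarrow> int fps \<times> int fps \<Rightarrow> int fps \<times> int fps \<Rightarrow> bool" where
  "eqn n x y \<longleftrightarrow> agree n (fst x) (fst y) \<and> agree n (snd x) (snd y)"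

lemma agree_refl[simp]: "agree n a a" by (simp add: agree_def)
lemma agree_sym: "agree n a b \<Longrightarrow> agree n b a" by (simp add: agree_def)
lemma agree_trans: "agree n a b \<Longrightarrow> agree n b c \<Longrightarrow> agree n a c" by (simp add: agree_def)
lemma eqn_refl[simp]: "eqn n x x" by (simp add: eqn_def)
lemma eqn_sym: "eqn n x y \<Longrightarrow> eqn n y x" by (simp add: eqn_def agree_sym)
lemma eqn_trans: "eqn n x y \<Longrightarrow> eqn n y z \<Longrightarrow> eqn n x z" by (meson eqn_def agree_trans)
lemma eqn_mono: "eqn n x y \<Longrightarrow> m \<le> n \<Longrightarrow> eqn m x y" by (auto simp: eqn_def agree_def)

lemma agree_mult: "agree n a a' \<Longrightarrow> agree n b b' \<Longrightarrow> agree n (a * b) (a' * b')"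
  unfolding agree_def fps_mult_nth by (auto intro!: sum.cong)

lemma agree_power: "agree n b b' \<Longrightarrow> agree n (b ^ k) (b' ^ k)"
  by (induction k) (simp_all add: agree_mult)

lemma agree_compose: "agree n a a' \<Longrightarrow> agree n b b' \<Longrightarrow> agree n (a oo b) (a' oo b')"
proof -
  assume A: "agree n a a'" and B: "agree n b b'"
  have P: "agree n (b ^ k) (b' ^ k)" for k using agree_power[OF B] .
  show ?thesis unfolding agree_def fps_compose_nth
  proof (intro allI impI sum.cong refl)
    fix i x assume "i \<le> n" "x \<in> {0..i}"
    then show "a $ x * b ^ x $ i = a' $ x * b' ^ x $ i"
      using A P[of x] by (auto simp: agree_def)
  qed
qed

lemma eqn_mult: "eqn n x x' \<Longrightarrow> eqn n y y' \<Longrightarrow> eqn n (x \<otimes>\<^bsub>SR\<^esub> y) (x' \<otimes>\<^bsub>SR\<^esub> y')"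
  by (simp add: eqn_def SR_mult_eq agree_mult agree_compose)

lemma eqn_inv:
  assumes "x \<in> carrier SR" "y \<in> carrier SR" "eqn n x y"
  shows "eqn n (inv\<^bsub>SR\<^esub> x) (inv\<^bsub>SR\<^esub> y)"
proof -
  have "inv\<^bsub>SR\<^esub> x = inv\<^bsub>SR\<^esub> x \<otimes>\<^bsub>SR\<^esub> y \<otimes>\<^bsub>SR\<^esub> inv\<^bsub>SR\<^esub> y"
    using assms by (simp add: G.m_assoc)
  moreover have "eqn n (inv\<^bsub>SR\<^esub> x \<otimes>\<^bsub>SR\<^esub> y \<otimes>\<^bsub>SR\<^esub> inv\<^bsub>SR\<^esub> y)
                       (inv\<^bsub>SR\<^esub> x \<otimes>\<^bsub>SR\<^esub> x \<otimes>\<^bsub>SR\<^esub> inv\<^bsub>SR\<^esub> y)"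
    by (intro eqn_mult eqn_refl) (simp add: assms eqn_sym)
  moreover have "inv\<^bsub>SR\<^esub> x \<otimes>\<^bsub>SR\<^esub> x \<otimes>\<^bsub>SR\<^esub> inv\<^bsub>SR\<^esub> y = inv\<^bsub>SR\<^esub> y"
    using assms by simp
  ultimately show ?thesis by simp
qed

lemma eqn_cancel:
  assumes "p \<in> carrier SR" "r \<in> carrier SR" "p \<otimes>\<^bsub>SR\<^esub> r = q" "eqn n p q"
  shows "eqn n r \<one>\<^bsub>SR\<^esub>"
proof -
  have q: "q \<in> carrier SR" using assms by auto
  have "r = inv\<^bsub>SR\<^esub> p \<otimes>\<^bsub>SR\<^esub> q" using assms
    using G.inv_solve_left[of r p q] q by simp
  moreover have "eqn n (inv\<^bsub>SR\<^esub> p \<otimes>\<^bsub>SR\<^esub> q) (inv\<^bsub>SR\<^esub> p \<otimes>\<^bsub>SR\<^esub> p)"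
    by (intro eqn_mult eqn_refl) (simp add: assms eqn_sym)
  moreover have "inv\<^bsub>SR\<^esub> p \<otimes>\<^bsub>SR\<^esub> p = \<one>\<^bsub>SR\<^esub>" using assms(1) by (rule G.l_inv)
  ultimately show ?thesis by simp
qed

definition comm :: "int fps \<times> int fps \<Rightarrow> int fps \<times> int fps \<Rightarrow> int fps \<times> int fps" where
  "comm x y = inv\<^bsub>SR\<^esub> x \<otimes>\<^bsub>SR\<^esub> inv\<^bsub>SR\<^esub> y \<otimes>\<^bsub>SR\<^esub> x \<otimes>\<^bsub>SR\<^esub> y"

lemma comm_set_sub: "{inv\<^bsub>SR\<^esub> x \<otimes>\<^bsub>SR\<^esub> inv\<^bsub>SR\<^esub> y \<otimes>\<^bsub>SR\<^esub> x \<otimes>\<^bsub>SR\<^esub> y | x y.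
                            x \<in> carrier SR \<and> y \<in> carrier SR} \<subseteq> carrier SR"
  by auto

lemma SR_comm_subgroup: "subgroup SR_comm SR"
  unfolding SR_comm_def by (rule G.generate_is_subgroup[OF comm_set_sub])

lemma comm_in: "x \<in> carrier SR \<Longrightarrow> y \<in> carrier SR \<Longrightarrow> comm x y \<in> SR_comm"
  unfolding SR_comm_def comm_def by (rule generate.incl) blast

lemma comm_carrier: "x \<in> carrier SR \<Longrightarrow> y \<in> carrier SR \<Longrightarrow> comm x y \<in> carrier SR"
  unfolding comm_def by simp

lemma comm_eq: "x \<in> carrier SR \<Longrightarrow> y \<in> carrier SR \<Longrightarrow> (y \<otimes>\<^bsub>SR\<^esub> x) \<otimes>\<^bsub>SR\<^esub> comm x y = x \<otimes>\<^bsub>SR\<^esub> y"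
proof -
  assume a: "x \<in> carrier SR" "y \<in> carrier SR"
  have "(y \<otimes>\<^bsub>SR\<^esub> x) \<otimes>\<^bsub>SR\<^esub> comm x y
      = y \<otimes>\<^bsub>SR\<^esub> (x \<otimes>\<^bsub>SR\<^esub> inv\<^bsub>SR\<^esub> x) \<otimes>\<^bsub>SR\<^esub> inv\<^bsub>SR\<^esub> y \<otimes>\<^bsub>SR\<^esub> x \<otimes>\<^bsub>SR\<^esub> y"
    using a unfolding comm_def by (simp only: G.m_assoc G.inv_closed G.m_closed)
  also have "\<dots> = x \<otimes>\<^bsub>SR\<^esub> y" using a by (simp add: G.m_assoc[symmetric])
  finally show ?thesis .
qed

lemma SR_comm_mult: "a \<in> SR_comm \<Longrightarrow> b \<in> SR_comm \<Longrightarrow> a \<otimes>\<^bsub>SR\<^esub> b \<in> SR_comm"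
  using SR_comm_subgroup by (simp add: subgroup.m_closed)

lemma SR_comm_inv: "a \<in> SR_comm \<Longrightarrow> inv\<^bsub>SR\<^esub> a \<in> SR_comm"
  using SR_comm_subgroup by (simp add: subgroup.m_inv_closed)

lemma SR_comm_one: "\<one>\<^bsub>SR\<^esub> \<in> SR_comm"
  using SR_comm_subgroup by (simp add: subgroup.one_closed)

lemma SR_comm_carrier: "a \<in> SR_comm \<Longrightarrow> a \<in> carrier SR"
  using SR_comm_subgroup by (meson subgroup.mem_carrier)

lemma comm_near:
  assumes "x \<in> carrier SR" "y \<in> carrier SR" "eqn n (y \<otimes>\<^bsub>SR\<^esub> x) (x \<otimes>\<^bsub>SR\<^esub> y)"
  shows "eqn n (comm x y) \<one>\<^bsub>SR\<^esub>"
  using eqn_cancel[OF _ comm_carrier comm_eq] assms by auto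


lemma fps_X_shift: "F $ 0 = (0::int) \<Longrightarrow> F = fps_X * fps_shift 1 F"
  by (intro fps_ext) (simp add: fps_X_power_mult_nth[of 1, simplified])

lemma Hpow0: "H $ 0 = (1::int) \<Longrightarrow> (H ^ i) $ 0 = 1"
  by (induction i) (simp_all add: fps_mult_nth)

lemma Hpow1: "H $ 0 = (1::int) \<Longrightarrow> (H ^ i) $ 1 = of_nat i * H $ 1"
proof (induction i)
  case (Suc i)
  then show ?case
    by (simp add: fps_mult_nth algebra_simps Hpow0)
qed simp


lemma Hpow2: "H $ 0 = (1::int) \<Longrightarrow> (H ^ i) $ 2 = of_nat i * H $ 2 + of_nat (i choose 2) * (H $ 1)^2"
proof (induction i)
  case 0 then show ?case by simp
next
  case (Suc i)
  have s: "{0..2::nat} = {0,1,2}" by auto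
  have "(H ^ Suc i) $ 2 = H$0 * (H^i)$2 + H$1 * (H^i)$1 + H$2 * (H^i)$0"
    by (simp add: fps_mult_nth s)
  also have "\<dots> = of_nat (Suc i) * H $ 2 + of_nat (Suc i choose 2) * (H $ 1)^2"
  proof -
    have c: "Suc i choose 2 = i + (i choose 2)" by (simp add: numeral_2_eq_2)
    have h1: "(H^i) $ Suc 0 = of_nat i * H $ Suc 0" using Hpow1[of H i] Suc.prems by simp
    show ?thesis using Suc by (simp add: h1 Hpow0 c power2_eq_square algebra_simps)
  qed
  finally show ?case .
qed

lemma Fpow:
  assumes "F $ 0 = (0::int)"
  shows "(F ^ i) $ (i + k) = (fps_shift 1 F ^ i) $ k"
proof -
  have "F ^ i = fps_X ^ i * fps_shift 1 F ^ i"
    by (subst fps_X_shift[OF assms]) (simp add: power_mult_distrib)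
  then show ?thesis by (simp add: fps_X_power_mult_nth)
qed

lemma pow_same: "F $ 0 = (0::int) \<Longrightarrow> F $ 1 = 1 \<Longrightarrow> (F ^ i) $ i = 1"
  using Fpow[of F i 0] Hpow0[of "fps_shift 1 F" i] by simp

lemma pow_below: "F $ 0 = (0::int) \<Longrightarrow> n < i \<Longrightarrow> (F ^ i) $ n = 0"
  using startsby_zero_power_prefix by blast

lemma pow_p1: "F $ 0 = (0::int) \<Longrightarrow> F $ 1 = 1 \<Longrightarrow> (F ^ i) $ (i+1) = of_nat i * F $ 2"
  using Fpow[of F i 1] Hpow1[of "fps_shift 1 F" i] by (simp add: numeral_eq_Suc)

lemma pow_p2: "F $ 0 = (0::int) \<Longrightarrow> F $ 1 = 1 \<Longrightarrow>
   (F ^ i) $ (i+2) = of_nat i * F $ 3 + of_nat (i choose 2) * (F $ 2)^2"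
  using Fpow[of F i 2] Hpow2[of "fps_shift 1 F" i] by (simp add: numeral_eq_Suc)


lemma comp_sum_from:
  assumes "\<And>i. i < D \<Longrightarrow> U $ i = 0"
  shows "(U oo F) $ n = (\<Sum>i\<in>{D..n}. U $ i * (F ^ i) $ n)"
  unfolding fps_compose_nth
  by (rule sum.mono_neutral_right) (auto simp: assms)

lemma lead_f:
  fixes F R :: "int fps"
  assumes F0: "F$0 = 0" and F1: "F$1 = 1" and R0: "R$0 = 0" and R1: "R$1 = 1"
    and RD: "\<And>j. 2 \<le> j \<Longrightarrow> j < D \<Longrightarrow> R$j = 0" and D2: "D \<ge> 2"
  shows "n < D \<Longrightarrow> (R oo F)$n = F$n"
    and "(R oo F)$D = F$D + R$D"
    and "(R oo F)$(D+1) = F$(D+1) + R$(D+1) + of_nat D * F$2 * R$D"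
    and "(R oo F)$(D+2) = F$(D+2) + R$(D+2) + of_nat (D+1) * F$2 * R$(D+1)
            + (of_nat D * F$3 + of_nat (D choose 2) * (F$2)^2) * R$D"
proof -
  have PS: "(F^i)$i = 1" for i using pow_same[OF F0 F1] .
  have P1: "(F^i)$(i+1) = of_nat i * F$2" for i using pow_p1[OF F0 F1] .
  have P2: "(F ^ i) $ (i+2) = of_nat i * F $ 3 + of_nat (i choose 2) * (F $ 2)^2" for i using pow_p2[OF F0 F1] .
  define U where "U = R - fps_X"
  have RU: "R = fps_X + U" by (simp add: U_def)
  have U0: "U $ i = 0" if "i < D" for i
    using that RD R0 R1 by (cases "i = 0"; cases "i = 1"; simp add: U_def)
  have Ui: "U $ i = R $ i" if "i \<ge> 2" for i using that by (simp add: U_def)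
  have RF: "(R oo F) $ n = F $ n + (U oo F) $ n" for n
    by (simp add: RU fps_compose_add_distrib F0)
  have S: "(U oo F) $ n = (\<Sum>i\<in>{D..n}. U $ i * (F ^ i) $ n)" for n
    by (rule comp_sum_from) (rule U0)
  show "n < D \<Longrightarrow> (R oo F)$n = F$n" by (simp add: RF S)
  show "(R oo F)$D = F$D + R$D"
    using D2 by (simp add: RF S Ui PS F0 F1)
  have e1: "{D..D+1} = {D, D+1}" by auto
  show "(R oo F)$(D+1) = F$(D+1) + R$(D+1) + of_nat D * F$2 * R$D"
  proof -
    have a: "(F^D)$(Suc D) = of_nat D * F$2" using P1[of D] by simp
    have b: "(F^(Suc D))$(Suc D) = 1" using PS[of "Suc D"] .
    show ?thesis using D2 by (simp add: RF S e1 Ui a b algebra_simps del: power_Suc)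
  qed
  have e2: "{D..D+2} = {D, D+1, D+2}" by auto
  have p2: "(F ^ (D+1)) $ (D+2) = of_nat (D+1) * F $ 2"
    using pow_p1[OF F0 F1, of "D+1"] by (simp add: add.assoc)
  show "(R oo F)$(D+2) = F$(D+2) + R$(D+2) + of_nat (D+1) * F$2 * R$(D+1)
            + (of_nat D * F$3 + of_nat (D choose 2) * (F$2)^2) * R$D"
  proof -
    have a: "(F^D)$(Suc (Suc D)) = of_nat D * F $ 3 + of_nat (D choose 2) * (F $ 2)^2" using P2[of D] by simp
    have b: "(F^(Suc D))$(Suc (Suc D)) = of_nat (Suc D) * F$2" using P1[of "Suc D"] by simp
    have c: "(F^(Suc (Suc D)))$(Suc (Suc D)) = 1" using PS[of "Suc (Suc D)"] .
    have d: "(F^D)$(Suc D) = of_nat D * F$2" using P1[of D] by simp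
    show ?thesis using D2 by (simp add: RF S e2 Ui a b c algebra_simps del: power_Suc)
  qed
qed

lemma lead_g:
  fixes F Gp Gr :: "int fps"
  assumes F0: "F$0 = 0" and F1: "F$1 = 1" and Gp0: "Gp$0 = 1" and Gr0: "Gr$0 = 1"
    and GD: "\<And>j. 1 \<le> j \<Longrightarrow> j < D \<Longrightarrow> Gr$j = 0" and D1: "D \<ge> 1"
  shows "n < D \<Longrightarrow> (Gp * (Gr oo F))$n = Gp$n"
    and "(Gp * (Gr oo F))$D = Gp$D + Gr$D"
proof -
  have PS: "(F^i)$i = 1" for i using pow_same[OF F0 F1] .
  define V where "V = Gr - 1"
  have V0: "V $ i = 0" if "i < D" for i
    using that GD Gr0 by (cases "i = 0"; simp add: V_def)
  have W: "(V oo F) $ n = (\<Sum>i\<in>{D..n}. V $ i * (F ^ i) $ n)" for n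
    by (rule comp_sum_from) (rule V0)
  have Wlow: "(V oo F) $ n = 0" if "n < D" for n using that by (simp add: W)
  have WD: "(V oo F) $ D = Gr $ D"
  proof -
    have "(V oo F) $ D = V $ D * (F^D) $ D" by (simp add: W)
    then show ?thesis using D1 PS[of D] by (simp add: V_def)
  qed
  have GF: "Gr oo F = 1 + (V oo F)" by (simp add: V_def fps_compose_sub_distrib)
  have M: "(Gp * (V oo F)) $ n = (\<Sum>j=0..n. Gp $ j * (V oo F) $ (n - j))" for n
    by (simp add: fps_mult_nth)
  show "n < D \<Longrightarrow> (Gp * (Gr oo F))$n = Gp$n"
    by (simp add: GF distrib_left M Wlow)
  have "(Gp * (V oo F)) $ D = Gp $ 0 * (V oo F) $ D"
  proof -
    have "(\<Sum>j=0..D. Gp$j * (V oo F)$(D-j)) = (\<Sum>j\<in>{0}. Gp$j * (V oo F)$(D-j))"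
      by (rule sum.mono_neutral_right) (use D1 in \<open>auto simp: Wlow\<close>)
    then show ?thesis unfolding M by simp
  qed
  then show "(Gp * (Gr oo F))$D = Gp$D + Gr$D"
    by (simp add: GF distrib_left WD Gp0)
qed


lemma eqn_one_fst: "eqn n r \<one>\<^bsub>SR\<^esub> \<Longrightarrow> 1 \<le> j \<Longrightarrow> j \<le> n \<Longrightarrow> fst r $ j = 0"
  by (auto simp: eqn_def agree_def SR_one_eq)
lemma eqn_one_snd: "eqn n r \<one>\<^bsub>SR\<^esub> \<Longrightarrow> 2 \<le> j \<Longrightarrow> j \<le> n \<Longrightarrow> snd r $ j = 0"
  by (auto simp: eqn_def agree_def SR_one_eq)

lemma mult_lead:
  assumes p: "p \<in> carrier SR" and r: "r \<in> carrier SR" and e: "eqn n r \<one>\<^bsub>SR\<^esub>" and n1: "n \<ge> 1"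
  shows "eqn n (p \<otimes>\<^bsub>SR\<^esub> r) p"
    and "fst (p \<otimes>\<^bsub>SR\<^esub> r) $ (n+1) = fst p $ (n+1) + fst r $ (n+1)"
    and "snd (p \<otimes>\<^bsub>SR\<^esub> r) $ (n+1) = snd p $ (n+1) + snd r $ (n+1)"
    and "snd (p \<otimes>\<^bsub>SR\<^esub> r) $ (n+2) = snd p $ (n+2) + snd r $ (n+2) + of_nat (n+1) * snd p $ 2 * snd r $ (n+1)"
    and "snd (p \<otimes>\<^bsub>SR\<^esub> r) $ (n+3) = snd p $ (n+3) + snd r $ (n+3) + of_nat (n+2) * snd p $ 2 * snd r $ (n+2)
            + (of_nat (n+1) * snd p $ 3 + of_nat ((n+1) choose 2) * (snd p $ 2)^2) * snd r $ (n+1)"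
proof -
  have F0: "snd p $ 0 = 0" and F1: "snd p $ 1 = 1" and G0: "fst p $ 0 = 1"
    using p by (auto simp: carrier_SR_iff)
  have R0: "snd r $ 0 = 0" and R1: "snd r $ 1 = 1" and Gr0: "fst r $ 0 = 1"
    using r by (auto simp: carrier_SR_iff)
  have RD: "snd r $ j = 0" if "2 \<le> j" "j < n+1" for j using eqn_one_snd[OF e] that by simp
  have GD: "fst r $ j = 0" if "1 \<le> j" "j < n+1" for j using eqn_one_fst[OF e] that by simp
  have D2: "n + 1 \<ge> 2" using n1 by simp
  note LF = lead_f[OF F0 F1 R0 R1 RD D2]
  note LG = lead_g[OF F0 F1 G0 Gr0 GD, of "n+1"]
  show "eqn n (p \<otimes>\<^bsub>SR\<^esub> r) p"
    unfolding eqn_def agree_def SR_mult_eq using LF(1) LG(1) by auto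
  show "fst (p \<otimes>\<^bsub>SR\<^esub> r) $ (n+1) = fst p $ (n+1) + fst r $ (n+1)"
    unfolding SR_mult_eq using LG(2) by simp
  show "snd (p \<otimes>\<^bsub>SR\<^esub> r) $ (n+1) = snd p $ (n+1) + snd r $ (n+1)"
    unfolding SR_mult_eq using LF(2) by simp
  show "snd (p \<otimes>\<^bsub>SR\<^esub> r) $ (n+2) = snd p $ (n+2) + snd r $ (n+2) + of_nat (n+1) * snd p $ 2 * snd r $ (n+1)"
    unfolding SR_mult_eq using LF(3) by (simp add: algebra_simps)
  show "snd (p \<otimes>\<^bsub>SR\<^esub> r) $ (n+3) = snd p $ (n+3) + snd r $ (n+3) + of_nat (n+2) * snd p $ 2 * snd r $ (n+2)
            + (of_nat (n+1) * snd p $ 3 + of_nat ((n+1) choose 2) * (snd p $ 2)^2) * snd r $ (n+1)"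
  proof -
    have e3: "n + 3 = Suc (Suc (Suc n))" by simp
    show ?thesis unfolding SR_mult_eq using LF(4) by (simp add: e3 algebra_simps)
  qed
qed

lemma comm_lead:
  assumes x: "x \<in> carrier SR" and y: "y \<in> carrier SR"
    and e: "eqn n (y \<otimes>\<^bsub>SR\<^esub> x) (x \<otimes>\<^bsub>SR\<^esub> y)" and n1: "n \<ge> 1"
  defines "r \<equiv> comm x y" and "p \<equiv> y \<otimes>\<^bsub>SR\<^esub> x" and "q \<equiv> x \<otimes>\<^bsub>SR\<^esub> y"
  shows "r \<in> SR_comm" "r \<in> carrier SR" "eqn n r \<one>\<^bsub>SR\<^esub>"
    and "fst r $ (n+1) = fst q $ (n+1) - fst p $ (n+1)"
    and "snd r $ (n+1) = snd q $ (n+1) - snd p $ (n+1)"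
    and "snd r $ (n+2) = snd q $ (n+2) - snd p $ (n+2) - of_nat (n+1) * snd p $ 2 * snd r $ (n+1)"
    and "snd r $ (n+3) = snd q $ (n+3) - snd p $ (n+3) - of_nat (n+2) * snd p $ 2 * snd r $ (n+2)
            - (of_nat (n+1) * snd p $ 3 + of_nat ((n+1) choose 2) * (snd p $ 2)^2) * snd r $ (n+1)"
proof -
  show "r \<in> SR_comm" unfolding r_def using x y by (rule comm_in)
  show rc: "r \<in> carrier SR" unfolding r_def using x y by (rule comm_carrier)
  show er: "eqn n r \<one>\<^bsub>SR\<^esub>" unfolding r_def using x y e by (rule comm_near)
  have pc: "p \<in> carrier SR" using x y by (simp add: p_def)
  have pq: "p \<otimes>\<^bsub>SR\<^esub> r = q" unfolding p_def q_def r_def using x y by (rule comm_eq)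
  note M = mult_lead[OF pc rc er n1, unfolded pq]
  show "fst r $ (n+1) = fst q $ (n+1) - fst p $ (n+1)" using M(2) by simp
  show "snd r $ (n+1) = snd q $ (n+1) - snd p $ (n+1)" using M(3) by simp
  show "snd r $ (n+2) = snd q $ (n+2) - snd p $ (n+2) - of_nat (n+1) * snd p $ 2 * snd r $ (n+1)"
    using M(4) by simp
  show "snd r $ (n+3) = snd q $ (n+3) - snd p $ (n+3) - of_nat (n+2) * snd p $ 2 * snd r $ (n+2)
            - (of_nat (n+1) * snd p $ 3 + of_nat ((n+1) choose 2) * (snd p $ 2)^2) * snd r $ (n+1)"
    using M(5) by simp
qed

lemma lag_mult: "fst x = 1 \<Longrightarrow> fst y = 1 \<Longrightarrow> fst (x \<otimes>\<^bsub>SR\<^esub> y) = 1"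
  by (simp add: SR_mult_eq)

lemma lag_inv:
  assumes x: "x \<in> carrier SR" and f: "fst x = 1"
  shows "fst (inv\<^bsub>SR\<^esub> x) = 1"
proof -
  define y where "y = inv\<^bsub>SR\<^esub> x"
  have yc: "y \<in> carrier SR" using x by (simp add: y_def)
  have "x \<otimes>\<^bsub>SR\<^esub> y = \<one>\<^bsub>SR\<^esub>" using x by (simp add: y_def)
  then have A: "fst y oo snd x = 1" using f by (simp add: SR_mult_eq SR_one_eq)
  define h where "h = finv (snd x)"
  have h0: "h $ 0 = 0" by (simp add: h_def finv_0)
  have xh: "snd x oo h = fps_X" using x by (simp add: h_def finv_right carrier_SR_iff)
  have "fst y = fst y oo (snd x oo h)" by (simp add: xh)
  also have "\<dots> = (fst y oo snd x) oo h" using x h0 by (simp add: fps_compose_assoc carrier_SR_iff)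
  also have "\<dots> = 1" by (simp add: A)
  finally show ?thesis by (simp add: y_def)
qed

lemma lag_comm: "x \<in> carrier SR \<Longrightarrow> y \<in> carrier SR \<Longrightarrow> fst x = 1 \<Longrightarrow> fst y = 1 \<Longrightarrow> fst (comm x y) = 1"
  unfolding comm_def by (simp add: lag_mult lag_inv)

definition Lg :: "nat \<Rightarrow> int \<Rightarrow> int fps \<times> int fps" where
  "Lg p a = (1, fps_X + fps_const a * fps_X ^ (p+1))"

definition Ap :: "int \<Rightarrow> int fps \<times> int fps" where
  "Ap c = (1 + fps_const c * fps_X, fps_X)"

lemma Lg_carrier: "p \<ge> 1 \<Longrightarrow> Lg p a \<in> carrier SR"
  by (simp add: Lg_def carrier_SR_iff)

lemma Ap_carrier: "Ap c \<in> carrier SR"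
  by (simp add: Ap_def carrier_SR_iff)

lemma compose_mono:
  assumes F0: "F $ 0 = (0::int)"
  shows "(fps_X + fps_const b * fps_X ^ k) oo F = F + fps_const b * F ^ k"
proof -
  have "(fps_X + fps_const b * fps_X ^ k) oo F = (fps_X oo F) + (fps_const b oo F) * (fps_X ^ k oo F)"
    by (simp only: fps_compose_add_distrib fps_compose_mult_distrib[OF F0])
  also have "\<dots> = F + fps_const b * F ^ k"
    using F0 by (simp add: fps_compose_power[OF F0, symmetric])
  finally show ?thesis .
qed

lemma Lg_mult: "p \<ge> 1 \<Longrightarrow> Lg p a \<otimes>\<^bsub>SR\<^esub> Lg q b =
   (1, (fps_X + fps_const a * fps_X ^ (p+1)) + fps_const b * (fps_X + fps_const a * fps_X ^ (p+1)) ^ (q+1))"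
proof -
  have F0: "(fps_X + fps_const a * fps_X ^ (p+1)) $ 0 = (0::int)" by simp
  show ?thesis unfolding Lg_def SR_mult_eq fst_conv snd_conv compose_mono[OF F0] by simp
qed

lemma binom_coeff:
  assumes "p \<ge> 1"
  shows "((1 + fps_const (a::int) * fps_X ^ p) ^ k) $ j =
           (if p dvd j then of_nat (k choose (j div p)) * a ^ (j div p) else 0)"
proof -
  have E0: "(1 + fps_const a * fps_X ^ p) ^ k = (\<Sum>i\<le>k. of_nat (k choose i) * (fps_const a * fps_X ^ p) ^ i)"
    using binomial_ring[of "fps_const a * fps_X ^ p" 1 k] by (simp add: add.commute)
  have T: "of_nat (k choose i) * (fps_const a * fps_X ^ p) ^ i = fps_const (of_nat (k choose i) * a ^ i) * fps_X ^ (p * i)" for i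
  proof -
    have "of_nat (k choose i) * (fps_const a * fps_X ^ p) ^ i = fps_const (of_nat (k choose i)) * fps_const (a ^ i) * fps_X ^ (p * i)"
      by (simp add: power_mult_distrib fps_const_power power_mult fps_of_nat mult.assoc)
    also have "\<dots> = fps_const (of_nat (k choose i) * a ^ i) * fps_X ^ (p * i)" by simp
    finally show ?thesis .
  qed
  have E: "(1 + fps_const a * fps_X ^ p) ^ k = (\<Sum>i\<le>k. fps_const (of_nat (k choose i) * a ^ i) * fps_X ^ (p * i))"
    unfolding E0 T ..
  have C: "(\<Sum>i\<le>k. fps_const (of_nat (k choose i) * a ^ i) * fps_X ^ (p * i)) $ j
        = (\<Sum>i\<le>k. if j = p * i then of_nat (k choose i) * a ^ i else 0)"
    by (simp add: fps_sum_nth) (intro sum.cong refl, simp)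
  show ?thesis
  proof (cases "p dvd j")
    case True
    then obtain i0 where j: "j = p * i0" by (auto elim: dvdE)
    have i0: "j div p = i0" using assms j by simp
    have S: "(\<Sum>i\<le>k. if j = p * i then of_nat (k choose i) * a ^ i else (0::int))
           = (if i0 \<le> k then of_nat (k choose i0) * a ^ i0 else 0)"
    proof -
      have "(\<Sum>i\<le>k. if j = p * i then of_nat (k choose i) * a ^ i else (0::int))
          = (\<Sum>i\<le>k. if i = i0 then of_nat (k choose i) * a ^ i else (0::int))"
        using assms j by (intro sum.cong refl) auto
      then show ?thesis by (simp add: sum.delta)
    qed
    show ?thesis using True by (simp add: E C S i0) 
  next
    case False
    have "(\<Sum>i\<le>k. if j = p * i then of_nat (k choose i) * a ^ i else (0::int)) = 0"
      using False by (intro sum.neutral) auto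
    then show ?thesis using False by (simp add: E C)
  qed
qed

lemma mono_pow_coeff:
  assumes "p \<ge> 1"
  shows "((fps_X + fps_const (a::int) * fps_X ^ (p+1)) ^ k) $ n =
     (if k \<le> n \<and> p dvd (n - k) then of_nat (k choose ((n-k) div p)) * a ^ ((n-k) div p) else 0)"
proof -
  have "fps_X + fps_const a * fps_X ^ (p+1) = fps_X * (1 + fps_const a * fps_X ^ p)"
    by (simp add: algebra_simps)
  then have "(fps_X + fps_const a * fps_X ^ (p+1)) ^ k = fps_X ^ k * (1 + fps_const a * fps_X ^ p) ^ k"
    by (simp add: power_mult_distrib)
  then show ?thesis using binom_coeff[OF assms] by (auto simp: fps_X_power_mult_nth)
qed


lemma Lg_prod:
  assumes "p \<ge> 1"
  shows "fst (Lg p a \<otimes>\<^bsub>SR\<^esub> Lg q b) = 1"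
    and "snd (Lg p a \<otimes>\<^bsub>SR\<^esub> Lg q b) $ n = (if n = 1 then 1 else 0) + (if n = p+1 then a else 0)
       + b * (if q+1 \<le> n \<and> p dvd (n - (q+1)) then of_nat ((q+1) choose ((n-(q+1)) div p)) * a ^ ((n-(q+1)) div p) else 0)"
proof -
  show "fst (Lg p a \<otimes>\<^bsub>SR\<^esub> Lg q b) = 1" using assms by (simp add: Lg_mult)
  have "snd (Lg p a \<otimes>\<^bsub>SR\<^esub> Lg q b) $ n = (fps_X + fps_const a * fps_X ^ (p+1)) $ n
      + b * ((fps_X + fps_const a * fps_X ^ (p+1)) ^ (q+1)) $ n"
    by (simp only: Lg_mult[OF assms] snd_conv fps_add_nth fps_mult_left_const_nth)
  also have "\<dots> = (fps_X + fps_const a * fps_X ^ (p+1)) $ n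
      + b * (if q+1 \<le> n \<and> p dvd (n - (q+1)) then of_nat ((q+1) choose ((n-(q+1)) div p)) * a ^ ((n-(q+1)) div p) else 0)"
    by (simp only: mono_pow_coeff[OF assms])
  also have "(fps_X + fps_const a * fps_X ^ (p+1)) $ n = (if n = 1 then 1 else 0) + (if n = p+1 then a else 0)"
    by (simp only: fps_add_nth fps_mult_left_const_nth fps_X_nth fps_X_power_nth) simp
  finally show "snd (Lg p a \<otimes>\<^bsub>SR\<^esub> Lg q b) $ n = (if n = 1 then 1 else 0) + (if n = p+1 then a else 0)
       + b * (if q+1 \<le> n \<and> p dvd (n - (q+1)) then of_nat ((q+1) choose ((n-(q+1)) div p)) * a ^ ((n-(q+1)) div p) else 0)" .
qed

lemma small_dvd: "(m::nat) dvd k \<Longrightarrow> k < m \<Longrightarrow> k = 0"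
  using dvd_imp_le by fastforce

lemma ndvd: "0 < j \<Longrightarrow> j < (m::nat) \<Longrightarrow> \<not> m dvd (m + j)"
  using small_dvd[of m j] by auto

lemma eqn_extend:
  assumes "eqn n x \<one>\<^bsub>SR\<^esub>" "fst x $ (n+1) = 0" "snd x $ (n+1) = 0" "n \<ge> 1"
  shows "eqn (n+1) x \<one>\<^bsub>SR\<^esub>"
  using assms unfolding eqn_def agree_def SR_one_eq by (auto simp: le_Suc_eq)

lemma eqn_lagI:
  assumes "fst x = 1" "\<And>i. i \<le> n \<Longrightarrow> snd x $ i = snd y $ i" "fst y = 1"
  shows "eqn n x y"
  using assms by (simp add: eqn_def agree_def)

lemma famO:
  assumes m: "m \<ge> 1"
  shows "\<exists>w. w \<in> SR_comm \<and> w \<in> carrier SR \<and> fst w = 1 \<and> eqn (2*m+1) w \<one>\<^bsub>SR\<^esub> \<and> snd w $ (2*m+2) = c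
     \<and> (m \<ge> 2 \<longrightarrow> snd w $ (2*m+3) = 0)"
proof -
  define x where "x = Lg m 1"
  define y where "y = Lg (m+1) c"
  have xc: "x \<in> carrier SR" and yc: "y \<in> carrier SR" using m by (simp_all add: x_def y_def Lg_carrier)
  have fx: "fst x = 1" and fy: "fst y = 1" by (simp_all add: x_def y_def Lg_def)
  have Q: "snd (x \<otimes>\<^bsub>SR\<^esub> y) $ n = (if n = 1 then 1 else 0) + (if n = m+1 then 1 else 0)
       + c * (if m+2 \<le> n \<and> m dvd (n - (m+2)) then of_nat ((m+2) choose ((n-(m+2)) div m)) else 0)" for n
    using Lg_prod(2)[OF m, of 1 "m+1" c n] by (simp add: x_def y_def)
  have P: "snd (y \<otimes>\<^bsub>SR\<^esub> x) $ n = (if n = 1 then 1 else 0) + (if n = m+2 then c else 0)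
       + (if m+1 \<le> n \<and> (m+1) dvd (n - (m+1)) then of_nat ((m+1) choose ((n-(m+1)) div (m+1))) * c ^ ((n-(m+1)) div (m+1)) else 0)" for n
    using Lg_prod(2)[of "m+1" c m 1 n] by (simp add: x_def y_def)
  have fQ: "fst (x \<otimes>\<^bsub>SR\<^esub> y) = 1" using Lg_prod(1)[OF m] by (simp add: x_def y_def)
  have fP: "fst (y \<otimes>\<^bsub>SR\<^esub> x) = 1" using Lg_prod(1)[of "m+1"] by (simp add: x_def y_def)
  have low: "snd (y \<otimes>\<^bsub>SR\<^esub> x) $ n = snd (x \<otimes>\<^bsub>SR\<^esub> y) $ n" if n: "n \<le> 2*m+1" for n
  proof -
    have T1: "(m+2 \<le> n \<and> m dvd (n - (m+2))) \<longleftrightarrow> n = m+2"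
      using small_dvd[of m "n - (m+2)"] n m by auto
    have T2: "(m+1 \<le> n \<and> (m+1) dvd (n - (m+1))) \<longleftrightarrow> n = m+1"
      using small_dvd[of "m+1" "n - (m+1)"] n by auto
    show ?thesis unfolding P Q using T1 T2 m by auto
  qed
  have e: "eqn (2*m+1) (y \<otimes>\<^bsub>SR\<^esub> x) (x \<otimes>\<^bsub>SR\<^esub> y)"
    by (rule eqn_lagI[OF fP _ fQ]) (rule low)
  note C = comm_lead[OF xc yc e]
  have q: "snd (x \<otimes>\<^bsub>SR\<^esub> y) $ (2*m+2) = c * of_nat (m+2)"
  proof -
    have "2*m+2 - (m+2) = m" by simp
    then show ?thesis unfolding Q using m by simp
  qed
  have p: "snd (y \<otimes>\<^bsub>SR\<^esub> x) $ (2*m+2) = of_nat (m+1) * c"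
  proof -
    have "2*m+2 - (m+1) = m+1" by simp
    then show ?thesis unfolding P using m by simp
  qed
  have r: "snd (comm x y) $ (2*m+2) = c" using C(5) q p by (simp add: algebra_simps)
  have nxt: "snd (comm x y) $ (2*m+3) = 0" if m2: "m \<ge> 2"
  proof -
    have e3: "2*m+1+2 = 2*m+3" by simp
    have P2: "snd (y \<otimes>\<^bsub>SR\<^esub> x) $ 2 = 0" unfolding P using m2 by auto
    have d1: "\<not> m dvd (m+1)" using m2 ndvd[of 1 m] by simp
    have d2: "\<not> (m+1) dvd (m+2)" using m2 ndvd[of 1 "m+1"] by simp
    have Q3: "snd (x \<otimes>\<^bsub>SR\<^esub> y) $ (2*m+3) = 0"
    proof -
      have "2*m+3 - (m+2) = m+1" by simp
      then show ?thesis unfolding Q using m2 d1 by simp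
    qed
    have P3: "snd (y \<otimes>\<^bsub>SR\<^esub> x) $ (2*m+3) = 0"
    proof -
      have "2*m+3 - (m+1) = m+2" by simp
      then show ?thesis unfolding P using m2 d2 by simp
    qed
    show ?thesis using C(6)[unfolded e3] P2 Q3 P3 by simp
  qed
  show ?thesis
    apply (rule exI[of _ "comm x y"])
    using C(1-3) r nxt xc yc fx fy by (simp add: lag_comm)
qed

lemma famE:
  assumes m: "m \<ge> 1"
  shows "\<exists>w. w \<in> SR_comm \<and> w \<in> carrier SR \<and> fst w = 1 \<and> eqn (2*m+2) w \<one>\<^bsub>SR\<^esub> \<and> snd w $ (2*m+3) = 2 * c
     \<and> (m \<ge> 3 \<longrightarrow> snd w $ (2*m+4) = 0 \<and> snd w $ (2*m+5) = 0)"
proof -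
  define x where "x = Lg m 1"
  define y where "y = Lg (m+2) c"
  have xc: "x \<in> carrier SR" and yc: "y \<in> carrier SR" using m by (simp_all add: x_def y_def Lg_carrier)
  have fx: "fst x = 1" and fy: "fst y = 1" by (simp_all add: x_def y_def Lg_def)
  have Q: "snd (x \<otimes>\<^bsub>SR\<^esub> y) $ n = (if n = 1 then 1 else 0) + (if n = m+1 then 1 else 0)
       + c * (if m+3 \<le> n \<and> m dvd (n - (m+3)) then of_nat ((m+3) choose ((n-(m+3)) div m)) else 0)" for n
  proof -
    have e: "m + 2 + 1 = m + 3" by simp
    show ?thesis using Lg_prod(2)[OF m, of 1 "m+2" c n] unfolding x_def y_def e by simp
  qed
  have P: "snd (y \<otimes>\<^bsub>SR\<^esub> x) $ n = (if n = 1 then 1 else 0) + (if n = m+3 then c else 0)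
       + (if m+1 \<le> n \<and> (m+2) dvd (n - (m+1)) then of_nat ((m+1) choose ((n-(m+1)) div (m+2))) * c ^ ((n-(m+1)) div (m+2)) else 0)" for n
    using Lg_prod(2)[of "m+2" c m 1 n] by (simp add: x_def y_def)
  have fQ: "fst (x \<otimes>\<^bsub>SR\<^esub> y) = 1" using Lg_prod(1)[OF m] by (simp add: x_def y_def)
  have fP: "fst (y \<otimes>\<^bsub>SR\<^esub> x) = 1" using Lg_prod(1)[of "m+2"] by (simp add: x_def y_def)
  have low: "snd (y \<otimes>\<^bsub>SR\<^esub> x) $ n = snd (x \<otimes>\<^bsub>SR\<^esub> y) $ n" if n: "n \<le> 2*m+2" for n
  proof -
    have T1: "(m+3 \<le> n \<and> m dvd (n - (m+3))) \<longleftrightarrow> n = m+3"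
      using small_dvd[of m "n - (m+3)"] n m by auto
    have T2: "(m+1 \<le> n \<and> (m+2) dvd (n - (m+1))) \<longleftrightarrow> n = m+1"
      using small_dvd[of "m+2" "n - (m+1)"] n by auto
    show ?thesis unfolding P Q using T1 T2 m by auto
  qed
  have e: "eqn (2*m+2) (y \<otimes>\<^bsub>SR\<^esub> x) (x \<otimes>\<^bsub>SR\<^esub> y)"
    by (rule eqn_lagI[OF fP _ fQ]) (rule low)
  note C = comm_lead[OF xc yc e]
  have q: "snd (x \<otimes>\<^bsub>SR\<^esub> y) $ (2*m+3) = c * of_nat (m+3)"
  proof -
    have "2*m+3 - (m+3) = m" by simp
    then show ?thesis unfolding Q using m by simp
  qed
  have p: "snd (y \<otimes>\<^bsub>SR\<^esub> x) $ (2*m+3) = of_nat (m+1) * c"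
  proof -
    have "2*m+3 - (m+1) = m+2" by simp
    then show ?thesis unfolding P using m by simp
  qed
  have e3: "2*m+2+1 = 2*m+3" by simp
  have r: "snd (comm x y) $ (2*m+3) = 2 * c" using C(5)[unfolded e3] q p by (simp add: algebra_simps)
  have nxt: "snd (comm x y) $ (2*m+4) = 0 \<and> snd (comm x y) $ (2*m+5) = 0" if m3: "m \<ge> 3"
  proof -
    have e4: "2*m+2+2 = 2*m+4" and e5: "2*m+2+3 = 2*m+5" by simp_all
    have P2: "snd (y \<otimes>\<^bsub>SR\<^esub> x) $ 2 = 0" unfolding P using m3 by auto
    have P3': "snd (y \<otimes>\<^bsub>SR\<^esub> x) $ 3 = 0" unfolding P using m3 by auto
    have d1: "\<not> m dvd (m+1)" using m3 ndvd[of 1 m] by simp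
    have d1': "\<not> m dvd (m+2)" using m3 ndvd[of 2 m] by simp
    have d2: "\<not> (m+2) dvd (m+3)"
    proof -
      have "\<not> (m+2) dvd ((m+2) + 1)" using m3 ndvd[of 1 "m+2"] by simp
      then show ?thesis by (simp add: eval_nat_numeral)
    qed
    have d2': "\<not> (m+2) dvd (m+4)"
    proof -
      have "\<not> (m+2) dvd ((m+2) + 2)" using m3 ndvd[of 2 "m+2"] by simp
      then show ?thesis by (simp add: eval_nat_numeral)
    qed
    have Q4: "snd (x \<otimes>\<^bsub>SR\<^esub> y) $ (2*m+4) = 0"
    proof -
      have "2*m+4 - (m+3) = m+1" by simp
      then show ?thesis unfolding Q using m3 d1 by simp
    qed
    have P4: "snd (y \<otimes>\<^bsub>SR\<^esub> x) $ (2*m+4) = 0"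
    proof -
      have "2*m+4 - (m+1) = m+3" by simp
      moreover have "\<not> (m+2) dvd (3+m)" using d2 by (simp add: add.commute)
      ultimately show ?thesis unfolding P using m3 d2 by simp
    qed
    have Q5: "snd (x \<otimes>\<^bsub>SR\<^esub> y) $ (2*m+5) = 0"
    proof -
      have "2*m+5 - (m+3) = m+2" by simp
      then show ?thesis unfolding Q using m3 d1' by simp
    qed
    have P5: "snd (y \<otimes>\<^bsub>SR\<^esub> x) $ (2*m+5) = 0"
    proof -
      have "2*m+5 - (m+1) = m+4" by simp
      moreover have "\<not> (m+2) dvd (4+m)" using d2' by (simp add: add.commute)
      ultimately show ?thesis unfolding P using m3 d2' by simp
    qed
    have r4: "snd (comm x y) $ (2*m+4) = 0" using C(6)[unfolded e4] P2 Q4 P4 by simp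
    have r5: "snd (comm x y) $ (2*m+5) = 0" using C(7)[unfolded e5] P2 P3' Q5 P5 r4 by simp
    show ?thesis using r4 r5 by simp
  qed
  show ?thesis
    apply (rule exI[of _ "comm x y"])
    using C(1-3) r nxt xc yc fx fy by (simp add: lag_comm)
qed


lemma famG:
  assumes n: "n \<ge> 1"
  shows "\<exists>w. w \<in> SR_comm \<and> w \<in> carrier SR \<and> eqn n w \<one>\<^bsub>SR\<^esub> \<and> fst w $ (n+1) = c \<and> snd w $ (n+1) = 0"
proof -
  define F where "F = fps_X + fps_const (1::int) * fps_X ^ (n+1)"
  define x where "x = Ap (-c)"
  define y where "y = Lg n 1"
  have xc: "x \<in> carrier SR" and yc: "y \<in> carrier SR" using n by (simp_all add: x_def y_def Lg_carrier Ap_carrier)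
  have F0: "F $ 0 = 0" by (simp add: F_def)
  have yF: "y = (1, F)" by (simp add: y_def Lg_def F_def)
  have q: "x \<otimes>\<^bsub>SR\<^esub> y = (1 + fps_const (-c) * fps_X, F)"
    unfolding yF by (simp add: x_def Ap_def SR_mult_eq)
  have comp: "(1 + fps_const (-c) * fps_X) oo F = 1 + fps_const (-c) * F"
    by (simp add: fps_compose_add_distrib fps_compose_mult_distrib[OF F0] F0)
  have p: "y \<otimes>\<^bsub>SR\<^esub> x = (1 + fps_const (-c) * F, F)"
    unfolding yF using comp F0 by (simp add: x_def Ap_def SR_mult_eq)
  have Fi: "F $ i = (if i = 1 then 1 else 0) + (if i = n+1 then 1 else 0)" for i
    by (auto simp: F_def fps_X_power_mult_nth)
  have e: "eqn n (y \<otimes>\<^bsub>SR\<^esub> x) (x \<otimes>\<^bsub>SR\<^esub> y)"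
    unfolding eqn_def agree_def p q using Fi by auto
  note C = comm_lead[OF xc yc e n]
  have f: "fst (comm x y) $ (n+1) = c" using C(4) n unfolding p q by (simp add: Fi)
  have s: "snd (comm x y) $ (n+1) = 0" using C(5) unfolding p q by simp
  show ?thesis using C(1-3) f s by blast
qed

lemma choose_4t: "t \<ge> 1 \<Longrightarrow> int ((4*t - 1) choose 2) = (4 * int t - 1) * (2 * int t - 1)"
proof -
  assume t: "t \<ge> 1"
  have "(4*t - 1) choose 2 = (4*t-1) * (4*t-1-1) div 2" by (simp add: choose_two)
  also have "(4*t-1) * (4*t-1-1) = 2 * ((4*t-1) * (2*t-1))" using t
    by (simp add: algebra_simps diff_mult_distrib diff_mult_distrib2)
  finally have "(4*t - 1) choose 2 = (4*t-1) * (2*t-1)" by simp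
  then show ?thesis using t by (simp add: of_nat_diff)
qed

lemma choose_s: "int ((4*s+7) choose 2) = (4 * int s + 7) * (2 * int s + 3)"
proof -
  have "(4*s+7) choose 2 = (4*s+7) * (4*s+6) div 2" by (simp add: choose_two algebra_simps)
  also have "(4*s+7) * (4*s+6) = 2 * ((4*s+7) * (2*s+3))" by (simp add: algebra_simps)
  finally show ?thesis by simp
qed

definition goodf :: "nat \<Rightarrow> int \<Rightarrow> int fps \<times> int fps \<Rightarrow> bool" where
  "goodf n c w \<longleftrightarrow> w \<in> SR_comm \<and> w \<in> carrier SR \<and> eqn n w \<one>\<^bsub>SR\<^esub> \<and> fst w $ (n+1) = 0 \<and> snd w $ (n+1) = c"

lemma famA: "\<exists>w. goodf (4*s+8) c w"
proof -
  define x where "x = Lg 1 1"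
  define y where "y = Lg (4*s+6) c"
  have xc: "x \<in> carrier SR" and yc: "y \<in> carrier SR" by (simp_all add: x_def y_def Lg_carrier)
  have fx: "fst x = 1" and fy: "fst y = 1" by (simp_all add: x_def y_def Lg_def)
  have Q: "snd (x \<otimes>\<^bsub>SR\<^esub> y) $ n = (if n = 1 then 1 else 0) + (if n = 2 then 1 else 0)
       + c * (if 4*s+7 \<le> n then of_nat ((4*s+7) choose (n-(4*s+7))) else 0)" for n
  proof -
    have e: "4*s+6+1 = 4*s+7" "(1::nat)+1 = 2" by simp_all
    show ?thesis using Lg_prod(2)[of 1 1 "4*s+6" c n] unfolding x_def y_def e by simp
  qed
  have P: "snd (y \<otimes>\<^bsub>SR\<^esub> x) $ n = (if n = 1 then 1 else 0) + (if n = 4*s+7 then c else 0)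
       + (if 2 \<le> n \<and> (4*s+6) dvd (n - 2) then of_nat (2 choose ((n-2) div (4*s+6))) * c ^ ((n-2) div (4*s+6)) else 0)" for n
  proof -
    have e: "4*s+6+1 = 4*s+7" "(1::nat)+1 = 2" by simp_all
    show ?thesis using Lg_prod(2)[of "4*s+6" c 1 1 n] unfolding x_def y_def e by simp
  qed
  have fQ: "fst (x \<otimes>\<^bsub>SR\<^esub> y) = 1" using Lg_prod(1)[of 1] by (simp add: x_def y_def)
  have fP: "fst (y \<otimes>\<^bsub>SR\<^esub> x) = 1" using Lg_prod(1)[of "4*s+6"] by (simp add: x_def y_def)
  have low: "snd (y \<otimes>\<^bsub>SR\<^esub> x) $ n = snd (x \<otimes>\<^bsub>SR\<^esub> y) $ n" if n: "n \<le> 4*s+7" for n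
  proof -
    have T2: "(2 \<le> n \<and> (4*s+6) dvd (n - 2)) \<longleftrightarrow> n = 2"
      using small_dvd[of "4*s+6" "n - 2"] n by auto
    show ?thesis unfolding P Q using T2 n by auto
  qed
  have e: "eqn (4*s+7) (y \<otimes>\<^bsub>SR\<^esub> x) (x \<otimes>\<^bsub>SR\<^esub> y)"
    by (rule eqn_lagI[OF fP _ fQ]) (rule low)
  note C = comm_lead[OF xc yc e]
  define r1 where "r1 = comm x y"
  have r1c: "r1 \<in> carrier SR" "r1 \<in> SR_comm" "eqn (4*s+7) r1 \<one>\<^bsub>SR\<^esub>" "fst r1 = 1"
    using C(1-3) lag_comm[OF xc yc fx fy] by (simp_all add: r1_def)
  have Q8: "snd (x \<otimes>\<^bsub>SR\<^esub> y) $ (4*s+8) = c * (4 * int s + 7)"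
  proof -
    have "4*s+8 - (4*s+7) = 1" by simp
    then show ?thesis unfolding Q by simp
  qed
  have P8: "snd (y \<otimes>\<^bsub>SR\<^esub> x) $ (4*s+8) = 2 * c"
  proof -
    have "4*s+8 - 2 = 4*s+6" by simp
    then show ?thesis unfolding P by (simp only:) (simp add: algebra_simps)
  qed
  have Q9: "snd (x \<otimes>\<^bsub>SR\<^esub> y) $ (4*s+9) = c * ((4 * int s + 7) * (2 * int s + 3))"
  proof -
    have "4*s+9 - (4*s+7) = 2" by simp
    then show ?thesis unfolding Q using choose_s by simp
  qed
  have P9: "snd (y \<otimes>\<^bsub>SR\<^esub> x) $ (4*s+9) = 0"
  proof -
    have "4*s+9 - 2 = (4*s+6) + 1" by simp
    moreover have "\<not> (4*s+6) dvd ((4*s+6) + 1)" using ndvd[of 1 "4*s+6"] by simp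
    ultimately show ?thesis unfolding P by simp
  qed
  have P2: "snd (y \<otimes>\<^bsub>SR\<^esub> x) $ 2 = 1" unfolding P by simp
  have r8: "snd r1 $ (4*s+8) = c * (4 * int s + 5)"
  proof -
    have e8: "4*s+7+1 = 4*s+8" by simp
    show ?thesis using C(5)[unfolded e8] Q8 P8 by (simp add: r1_def algebra_simps)
  qed
  have r9: "snd r1 $ (4*s+9) = c * ((4 * int s + 7) * (2 * int s + 3)) - (4 * int s + 8) * (c * (4 * int s + 5))"
  proof -
    have e9: "4*s+7+2 = 4*s+9" and e8: "4*s+7+1 = 4*s+8" by simp_all
    show ?thesis using C(6)[unfolded e9 e8] Q9 P9 P2 r8 by (simp add: r1_def algebra_simps)
  qed
  obtain r2 where r2: "r2 \<in> SR_comm" "r2 \<in> carrier SR" "fst r2 = 1" "eqn (2*(2*s+3)+1) r2 \<one>\<^bsub>SR\<^esub>"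
     "snd r2 $ (2*(2*s+3)+2) = - (c * (4 * int s + 5))" "snd r2 $ (2*(2*s+3)+3) = 0"
    using famO[of "2*s+3" "- (c * (4 * int s + 5))"] by auto
  have r2': "eqn (4*s+7) r2 \<one>\<^bsub>SR\<^esub>" "snd r2 $ (4*s+8) = - (c * (4 * int s + 5))" "snd r2 $ (4*s+9) = 0"
    using r2(4-6) by (simp_all add: algebra_simps)
  define k where "k = c * (4 * (int s)^2 + 13 * int s + 10)"
  obtain r3 where r3: "r3 \<in> SR_comm" "r3 \<in> carrier SR" "fst r3 = 1" "eqn (2*(2*s+3)+2) r3 \<one>\<^bsub>SR\<^esub>"
     "snd r3 $ (2*(2*s+3)+3) = 2 * k"
    using famE[of "2*s+3" k] by auto
  have r3': "eqn (4*s+8) r3 \<one>\<^bsub>SR\<^esub>" "snd r3 $ (4*s+9) = 2 * k"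
    using r3(4-5) by (simp_all add: algebra_simps)
  define w12 where "w12 = r1 \<otimes>\<^bsub>SR\<^esub> r2"
  have n1: "4*s+7 \<ge> 1" and n2: "4*s+8 \<ge> 1" by simp_all
  note M1 = mult_lead[OF r1c(1) r2(2) r2'(1) n1]
  have r12: "snd r1 $ 2 = 0" using eqn_one_snd[OF r1c(3), of 2] by simp
  have e8: "4*s+7+1 = 4*s+8" and e9: "4*s+7+2 = 4*s+9" by simp_all
  have w12c: "w12 \<in> carrier SR" "w12 \<in> SR_comm" "fst w12 = 1"
    using r1c r2 by (simp_all add: w12_def SR_comm_mult lag_mult)
  have w12e: "eqn (4*s+7) w12 \<one>\<^bsub>SR\<^esub>" using eqn_trans[OF M1(1) r1c(3)] by (simp add: w12_def)
  have w8: "snd w12 $ (4*s+8) = 0" using M1(3)[unfolded e8] r8 r2'(2) by (simp add: w12_def)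
  have w9: "snd w12 $ (4*s+9) = c * ((4 * int s + 7) * (2 * int s + 3)) - (4 * int s + 8) * (c * (4 * int s + 5))"
    using M1(4)[unfolded e8 e9] r9 r2'(3) r12 by (simp add: w12_def)
  have w12e': "eqn (4*s+8) w12 \<one>\<^bsub>SR\<^esub>"
    using eqn_extend[OF w12e _ _ n1, unfolded e8] w12c(3) w8 by simp
  define w where "w = w12 \<otimes>\<^bsub>SR\<^esub> r3"
  note M2 = mult_lead[OF w12c(1) r3(2) r3'(1) n2]
  have e9': "4*s+8+1 = 4*s+9" by simp
  have wc: "w \<in> carrier SR" "w \<in> SR_comm" "fst w = 1"
    using w12c r3 by (simp_all add: w_def SR_comm_mult lag_mult)
  have we: "eqn (4*s+8) w \<one>\<^bsub>SR\<^esub>" using eqn_trans[OF M2(1) w12e'] by (simp add: w_def)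
  have ws: "snd w $ (4*s+9) = c"
  proof -
    have "snd w $ (4*s+9) = snd w12 $ (4*s+9) + 2 * k" using M2(3)[unfolded e9'] r3'(2) by (simp add: w_def)
    also have "\<dots> = c" unfolding w9 k_def by (simp add: algebra_simps power2_eq_square)
    finally show ?thesis .
  qed
  show ?thesis unfolding goodf_def e9' using wc we ws by (intro exI[of _ w]) simp
qed
lemma famB: "\<exists>w. goodf (4*s+10) c w"
proof -
  define x where "x = Lg 2 1"
  define y where "y = Lg (4*s+6) c"
  have xc: "x \<in> carrier SR" and yc: "y \<in> carrier SR" by (simp_all add: x_def y_def Lg_carrier)
  have fx: "fst x = 1" and fy: "fst y = 1" by (simp_all add: x_def y_def Lg_def)
  have Q: "snd (x \<otimes>\<^bsub>SR\<^esub> y) $ n = (if n = 1 then 1 else 0) + (if n = 3 then 1 else 0)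
       + c * (if 4*s+7 \<le> n \<and> 2 dvd (n - (4*s+7)) then of_nat ((4*s+7) choose ((n-(4*s+7)) div 2)) else 0)" for n
  proof -
    have e: "4*s+6+1 = 4*s+7" "(2::nat)+1 = 3" by simp_all
    show ?thesis using Lg_prod(2)[of 2 1 "4*s+6" c n] unfolding x_def y_def e power_one mult_1_right by simp
  qed
  have P: "snd (y \<otimes>\<^bsub>SR\<^esub> x) $ n = (if n = 1 then 1 else 0) + (if n = 4*s+7 then c else 0)
       + (if 3 \<le> n \<and> (4*s+6) dvd (n - 3) then of_nat (3 choose ((n-3) div (4*s+6))) * c ^ ((n-3) div (4*s+6)) else 0)" for n
  proof -
    have e: "4*s+6+1 = 4*s+7" "(2::nat)+1 = 3" by simp_all
    show ?thesis using Lg_prod(2)[of "4*s+6" c 2 1 n] unfolding x_def y_def e by simp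
  qed
  have fQ: "fst (x \<otimes>\<^bsub>SR\<^esub> y) = 1" using Lg_prod(1)[of 2] by (simp add: x_def y_def)
  have fP: "fst (y \<otimes>\<^bsub>SR\<^esub> x) = 1" using Lg_prod(1)[of "4*s+6"] by (simp add: x_def y_def)
  have low: "snd (y \<otimes>\<^bsub>SR\<^esub> x) $ n = snd (x \<otimes>\<^bsub>SR\<^esub> y) $ n" if n: "n \<le> 4*s+8" for n
  proof -
    have T1: "(4*s+7 \<le> n \<and> 2 dvd (n - (4*s+7))) \<longleftrightarrow> n = 4*s+7"
    proof
      assume a: "4*s+7 \<le> n \<and> 2 dvd (n - (4*s+7))"
      show "n = 4*s+7"
      proof (rule ccontr)
        assume "n \<noteq> 4*s+7"
        then have "n = 4*s+8" using a n by auto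
        then show False using a by simp
      qed
    qed simp
    have T2: "(3 \<le> n \<and> (4*s+6) dvd (n - 3)) \<longleftrightarrow> n = 3"
      using small_dvd[of "4*s+6" "n - 3"] n by auto
    show ?thesis unfolding P Q using T1 T2 n by auto
  qed
  have e: "eqn (4*s+8) (y \<otimes>\<^bsub>SR\<^esub> x) (x \<otimes>\<^bsub>SR\<^esub> y)"
    by (rule eqn_lagI[OF fP _ fQ]) (rule low)
  note C = comm_lead[OF xc yc e]
  define r1 where "r1 = comm x y"
  have r1c: "r1 \<in> carrier SR" "r1 \<in> SR_comm" "eqn (4*s+8) r1 \<one>\<^bsub>SR\<^esub>" "fst r1 = 1"
    using C(1-3) lag_comm[OF xc yc fx fy] by (simp_all add: r1_def)
  have Q9: "snd (x \<otimes>\<^bsub>SR\<^esub> y) $ (4*s+9) = c * (4 * int s + 7)"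
  proof -
    have "4*s+9 - (4*s+7) = 2" by simp
    then show ?thesis unfolding Q by simp
  qed
  have P9: "snd (y \<otimes>\<^bsub>SR\<^esub> x) $ (4*s+9) = 3 * c"
  proof -
    have "4*s+9 - 3 = 4*s+6" by simp
    then show ?thesis unfolding P by (simp only:) (simp add: algebra_simps)
  qed
  have Q10: "snd (x \<otimes>\<^bsub>SR\<^esub> y) $ (4*s+10) = 0"
  proof -
    have "4*s+10 - (4*s+7) = 3" by simp
    then show ?thesis unfolding Q by simp
  qed
  have P10: "snd (y \<otimes>\<^bsub>SR\<^esub> x) $ (4*s+10) = 0"
  proof -
    have "4*s+10 - 3 = (4*s+6) + 1" by simp
    moreover have "\<not> (4*s+6) dvd ((4*s+6) + 1)" using ndvd[of 1 "4*s+6"] by simp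
    ultimately show ?thesis unfolding P by simp
  qed
  have Q11: "snd (x \<otimes>\<^bsub>SR\<^esub> y) $ (4*s+11) = c * ((4 * int s + 7) * (2 * int s + 3))"
  proof -
    have "4*s+11 - (4*s+7) = 4" by simp
    then show ?thesis unfolding Q using choose_s by simp
  qed
  have P11: "snd (y \<otimes>\<^bsub>SR\<^esub> x) $ (4*s+11) = 0"
  proof -
    have "4*s+11 - 3 = (4*s+6) + 2" by simp
    moreover have "\<not> (4*s+6) dvd ((4*s+6) + 2)" using ndvd[of 2 "4*s+6"] by simp
    ultimately show ?thesis unfolding P by simp
  qed
  have P2: "snd (y \<otimes>\<^bsub>SR\<^esub> x) $ 2 = 0" unfolding P by simp
  have P3: "snd (y \<otimes>\<^bsub>SR\<^esub> x) $ 3 = 1" unfolding P by simp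
  have e9: "4*s+8+1 = 4*s+9" and e10: "4*s+8+2 = 4*s+10" and e11: "4*s+8+3 = 4*s+11" by simp_all
  have r9: "snd r1 $ (4*s+9) = c * (4 * int s + 4)"
    using C(5)[unfolded e9] Q9 P9 by (simp add: r1_def algebra_simps)
  have r10: "snd r1 $ (4*s+10) = 0"
    using C(6)[unfolded e9 e10] Q10 P10 P2 by (simp add: r1_def algebra_simps)
  have r11: "snd r1 $ (4*s+11) = c * ((4 * int s + 7) * (2 * int s + 3)) - (4 * int s + 9) * (c * (4 * int s + 4))"
    using C(7)[unfolded e9 e10 e11] Q11 P11 P2 P3 r9 r10 by (simp add: r1_def algebra_simps)
  obtain r2 where r2: "r2 \<in> SR_comm" "r2 \<in> carrier SR" "fst r2 = 1" "eqn (2*(2*s+3)+2) r2 \<one>\<^bsub>SR\<^esub>"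
     "snd r2 $ (2*(2*s+3)+3) = 2 * (- (c * (2 * int s + 2)))"
     "snd r2 $ (2*(2*s+3)+4) = 0" "snd r2 $ (2*(2*s+3)+5) = 0"
    using famE[of "2*s+3" "- (c * (2 * int s + 2))"] by auto
  have r2': "eqn (4*s+8) r2 \<one>\<^bsub>SR\<^esub>" "snd r2 $ (4*s+9) = - (c * (4 * int s + 4))"
     "snd r2 $ (4*s+10) = 0" "snd r2 $ (4*s+11) = 0"
    using r2(4-7) by (simp_all add: algebra_simps)
  define k where "k = c * (4 * (int s)^2 + 13 * int s + 8)"
  obtain r3 where r3: "r3 \<in> SR_comm" "r3 \<in> carrier SR" "fst r3 = 1" "eqn (2*(2*s+4)+2) r3 \<one>\<^bsub>SR\<^esub>"
     "snd r3 $ (2*(2*s+4)+3) = 2 * k"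
    using famE[of "2*s+4" k] by auto
  have r3': "eqn (4*s+10) r3 \<one>\<^bsub>SR\<^esub>" "snd r3 $ (4*s+11) = 2 * k"
    using r3(4-5) by (simp_all add: algebra_simps)
  define w12 where "w12 = r1 \<otimes>\<^bsub>SR\<^esub> r2"
  have n1: "4*s+8 \<ge> 1" and n2: "4*s+9 \<ge> 1" and n3: "4*s+10 \<ge> 1" by simp_all
  note M1 = mult_lead[OF r1c(1) r2(2) r2'(1) n1]
  have r12: "snd r1 $ 2 = 0" using eqn_one_snd[OF r1c(3), of 2] by simp
  have r13: "snd r1 $ 3 = 0" using eqn_one_snd[OF r1c(3), of 3] by simp
  have w12c: "w12 \<in> carrier SR" "w12 \<in> SR_comm" "fst w12 = 1"
    using r1c r2 by (simp_all add: w12_def SR_comm_mult lag_mult)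
  have w12e: "eqn (4*s+8) w12 \<one>\<^bsub>SR\<^esub>" using eqn_trans[OF M1(1) r1c(3)] by (simp add: w12_def)
  have w9: "snd w12 $ (4*s+9) = 0" using M1(3)[unfolded e9] r9 r2'(2) by (simp add: w12_def)
  have w10: "snd w12 $ (4*s+10) = 0" using M1(4)[unfolded e9 e10] r10 r2'(3) r12 by (simp add: w12_def)
  have w11: "snd w12 $ (4*s+11) = c * ((4 * int s + 7) * (2 * int s + 3)) - (4 * int s + 9) * (c * (4 * int s + 4))"
    using M1(5)[unfolded e9 e10 e11] r11 r2'(4) r12 r13 by (simp add: w12_def)
  have w12e1: "eqn (4*s+9) w12 \<one>\<^bsub>SR\<^esub>"
    using eqn_extend[OF w12e _ _ n1, unfolded e9] w12c(3) w9 by simp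
  have e10': "4*s+9+1 = 4*s+10" by simp
  have w12e2: "eqn (4*s+10) w12 \<one>\<^bsub>SR\<^esub>"
    using eqn_extend[OF w12e1 _ _ n2, unfolded e10'] w12c(3) w10 by simp
  define w where "w = w12 \<otimes>\<^bsub>SR\<^esub> r3"
  note M2 = mult_lead[OF w12c(1) r3(2) r3'(1) n3]
  have e11': "4*s+10+1 = 4*s+11" by simp
  have wc: "w \<in> carrier SR" "w \<in> SR_comm" "fst w = 1"
    using w12c r3 by (simp_all add: w_def SR_comm_mult lag_mult)
  have we: "eqn (4*s+10) w \<one>\<^bsub>SR\<^esub>" using eqn_trans[OF M2(1) w12e2] by (simp add: w_def)
  have ws: "snd w $ (4*s+11) = c"
  proof -
    have "snd w $ (4*s+11) = snd w12 $ (4*s+11) + 2 * k" using M2(3)[unfolded e11'] r3'(2) by (simp add: w_def)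
    also have "\<dots> = c" unfolding w11 k_def by (simp add: algebra_simps power2_eq_square)
    finally show ?thesis .
  qed
  show ?thesis unfolding goodf_def e11' using wc we ws by (intro exI[of _ w]) simp
qed


lemma sum_exp: "(\<Sum>i=0..Suc n. g i) = (\<Sum>i=0..n. g i) + g (Suc n)" for g :: "nat \<Rightarrow> int"
  by (rule sum.atLeast0_atMost_Suc)

lemma comp2:
  fixes f h :: "int fps"
  assumes "f$0 = 0" "f$1 = 1" "h$0 = 0" "h$1 = 1"
  shows "(h oo f)$2 = f$2 + h$2"
  using assms by (simp add: fps_compose_nth fps_mult_nth numeral_eq_Suc sum_exp algebra_simps power2_eq_square power3_eq_cube)

lemma comp3:
  fixes f h :: "int fps"
  assumes "f$0 = 0" "f$1 = 1" "h$0 = 0" "h$1 = 1"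
  shows "(h oo f)$3 = 2 * f$2 * h$2 + f$3 + h$3"
  using assms by (simp add: fps_compose_nth fps_mult_nth numeral_eq_Suc sum_exp algebra_simps power2_eq_square power3_eq_cube)

lemma comp4:
  fixes f h :: "int fps"
  assumes "f$0 = 0" "f$1 = 1" "h$0 = 0" "h$1 = 1"
  shows "(h oo f)$4 = 3 * f$2 * h$3 + (f$2)^2 * h$2 + 2 * f$3 * h$2 + f$4 + h$4"
  using assms by (simp add: fps_compose_nth fps_mult_nth numeral_eq_Suc sum_exp algebra_simps power2_eq_square power3_eq_cube)

lemma comp5:
  fixes f h :: "int fps"
  assumes "f$0 = 0" "f$1 = 1" "h$0 = 0" "h$1 = 1"
  shows "(h oo f)$5 = 2 * f$2 * f$3 * h$2 + 4 * f$2 * h$4 + 3 * (f$2)^2 * h$3 + 3 * f$3 * h$3 + 2 * f$4 * h$2 + f$5 + h$5"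
  using assms by (simp add: fps_compose_nth fps_mult_nth numeral_eq_Suc sum_exp algebra_simps power2_eq_square power3_eq_cube)

lemma comp7:
  fixes f h :: "int fps"
  assumes "f$0 = 0" "f$1 = 1" "h$0 = 0" "h$1 = 1"
  shows "(h oo f)$7 = 12 * f$2 * f$3 * h$4 + 6 * f$2 * f$4 * h$3 + 2 * f$2 * f$5 * h$2 + 6 * f$2 * h$6 + 3 * (f$2)^2 * f$3 * h$3 + 10 * (f$2)^2 * h$5 + 4 * (f$2)^3 * h$4 + 2 * f$3 * f$4 * h$2 + 5 * f$3 * h$5 + 3 * (f$3)^2 * h$3 + 4 * f$4 * h$4 + 3 * f$5 * h$3 + 2 * f$6 * h$2 + f$7 + h$7"
  using assms by (simp add: fps_compose_nth fps_mult_nth numeral_eq_Suc sum_exp algebra_simps power2_eq_square power3_eq_cube)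

lemma ev2: "even ((x::int)^2 - x)"
  by (simp add: power2_eq_square)

lemma D1_even:
  fixes axb axc axd bxb bxc bxd :: int
  shows "(4 * axb * axc * bxb - 1 * axb * bxb + 2 * axb * bxb * bxc + 3 * axb * bxc + 4 * axb * bxd + axb^2 * bxb + 2 * axb^2 * bxb^2 + 3 * axb^2 * bxc + 2 * axc * bxb + 4 * axc * bxc + 2 * axd * bxb) mod 2 = 0"
proof -
  have "4 * axb * axc * bxb - 1 * axb * bxb + 2 * axb * bxb * bxc + 3 * axb * bxc + 4 * axb * bxd + axb^2 * bxb + 2 * axb^2 * bxb^2 + 3 * axb^2 * bxc + 2 * axc * bxb + 4 * axc * bxc + 2 * axd * bxb = 2 * (2 * axb * axc * bxb + axb * bxb + axb * bxb * bxc + 3 * axb * bxc + 2 * axb * bxd + axc * bxb + 2 * axc * bxc + axd * bxb) + (2 * bxb^2 * (axb^2 - axb) + 2 * axb * (bxb^2 - bxb) + 3 * bxc * (axb^2 - axb) + 1 * bxb * (axb^2 - axb))" by (simp add: algebra_simps power2_eq_square power3_eq_cube)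
  moreover have "even (2 * bxb^2 * (axb^2 - axb) + 2 * axb * (bxb^2 - bxb) + 3 * bxc * (axb^2 - axb) + 1 * bxb * (axb^2 - axb))" by (simp add: ev2)
  ultimately have "even (4 * axb * axc * bxb - 1 * axb * bxb + 2 * axb * bxb * bxc + 3 * axb * bxc + 4 * axb * bxd + axb^2 * bxb + 2 * axb^2 * bxb^2 + 3 * axb^2 * bxc + 2 * axc * bxb + 4 * axc * bxc + 2 * axd * bxb)" by (metis dvd_add dvd_triv_left)
  then show ?thesis by simp
qed

lemma D2_even:
  fixes axb axc axd axe axf bxb bxc bxd bxe bxf :: int
  shows "(2 * axb * axc * bxb + 8 * axb * axc * bxb * bxc + 16 * axb * axc * bxd + 2 * axb * axc^2 * bxb + 4 * axb * axd * bxb^2 + 6 * axb * axd * bxc + 4 * axb * axe * bxb + 2 * axb * bxb * bxe + 4 * axb * bxc * bxd + 4 * axb * bxd + 6 * axb * bxf + 4 * axb^2 * axc * bxb^2 + 6 * axb^2 * axc * bxc + 8 * axb^2 * bxb * bxd + 3 * axb^2 * bxc + 3 * axb^2 * bxc^2 + 10 * axb^2 * bxe + 6 * axb^3 * bxb * bxc + 4 * axb^3 * bxd + 4 * axc * axd * bxb + 3 * axc * bxc + 3 * axc * bxc^2 + 6 * axc * bxe + 6 * axc^2 * bxc + 2 * axd * bxb + 2 * axd * bxb * bxc + 4 * axd * bxd + 4 * axe * bxc + 2 * axf * bxb) mod 2 = 0"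
proof -
  have "2 * axb * axc * bxb + 8 * axb * axc * bxb * bxc + 16 * axb * axc * bxd + 2 * axb * axc^2 * bxb + 4 * axb * axd * bxb^2 + 6 * axb * axd * bxc + 4 * axb * axe * bxb + 2 * axb * bxb * bxe + 4 * axb * bxc * bxd + 4 * axb * bxd + 6 * axb * bxf + 4 * axb^2 * axc * bxb^2 + 6 * axb^2 * axc * bxc + 8 * axb^2 * bxb * bxd + 3 * axb^2 * bxc + 3 * axb^2 * bxc^2 + 10 * axb^2 * bxe + 6 * axb^3 * bxb * bxc + 4 * axb^3 * bxd + 4 * axc * axd * bxb + 3 * axc * bxc + 3 * axc * bxc^2 + 6 * axc * bxe + 6 * axc^2 * bxc + 2 * axd * bxb + 2 * axd * bxb * bxc + 4 * axd * bxd + 4 * axe * bxc + 2 * axf * bxb = 2 * (4 * axb * axc * bxb + 4 * axb * axc * bxb * bxc + 3 * axb * axc * bxc + 8 * axb * axc * bxd + 2 * axb * axd * bxb + 3 * axb * axd * bxc + 2 * axb * axe * bxb + 3 * axb * bxb * bxc + 4 * axb * bxb * bxd + axb * bxb * bxe + 3 * axb * bxc + 2 * axb * bxc * bxd + 4 * axb * bxd + 5 * axb * bxe + 3 * axb * bxf + 2 * axc * axd * bxb + 6 * axc * bxc + 3 * axc * bxe + axd * bxb + axd * bxb * bxc + 2 * axd * bxd + 2 * axe * bxc + axf * bxb) + (3 * bxc^2 * (axb^2 - axb) + 3 * axb * (bxc^2 - bxc) + 3 * axc * (bxc^2 - bxc) + 8 * bxb * bxd * (axb^2 - axb) + 6 *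 axb * bxb * bxc * (axb^2 - axb) + 6 * bxb * bxc * (axb^2 - axb) + 4 * axc * bxb^2 * (axb^2 - axb) + 4 * axb * axc * (bxb^2 - bxb) + 4 * axb * axd * (bxb^2 - bxb) + 2 * axb * bxb * (axc^2 - axc) + 10 * bxe * (axb^2 - axb) + 4 * axb * bxd * (axb^2 - axb) + 4 * bxd * (axb^2 - axb) + 6 * axc * bxc * (axb^2 - axb) + 6 * bxc * (axc^2 - axc) + 3 * bxc * (axb^2 - axb))" by (simp add: algebra_simps power2_eq_square power3_eq_cube)
  moreover have "even (3 * bxc^2 * (axb^2 - axb) + 3 * axb * (bxc^2 - bxc) + 3 * axc * (bxc^2 - bxc) + 8 * bxb * bxd * (axb^2 - axb) + 6 * axb * bxb * bxc * (axb^2 - axb) + 6 * bxb * bxc * (axb^2 - axb) + 4 * axc * bxb^2 * (axb^2 - axb) + 4 * axb * axc * (bxb^2 - bxb) + 4 * axb * axd * (bxb^2 - bxb) + 2 * axb * bxb * (axc^2 - axc) + 10 * bxe * (axb^2 - axb) + 4 * axb * bxd * (axb^2 - axb) + 4 * bxd * (axb^2 - axb) + 6 * axc * bxc * (axb^2 - axb) + 6 * bxc * (axc^2 - axc) + 3 * bxc * (axb^2 - axb))" by (simp add: ev2)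
  ultimately have "even (2 * axb * axc * bxb + 8 * axb * axc * bxb * bxc + 16 * axb * axc * bxd + 2 * axb * axc^2 * bxb + 4 * axb * axd * bxb^2 + 6 * axb * axd * bxc + 4 * axb * axe * bxb + 2 * axb * bxb * bxe + 4 * axb * bxc * bxd + 4 * axb * bxd + 6 * axb * bxf + 4 * axb^2 * axc * bxb^2 + 6 * axb^2 * axc * bxc + 8 * axb^2 * bxb * bxd + 3 * axb^2 * bxc + 3 * axb^2 * bxc^2 + 10 * axb^2 * bxe + 6 * axb^3 * bxb * bxc + 4 * axb^3 * bxd + 4 * axc * axd * bxb + 3 * axc * bxc + 3 * axc * bxc^2 + 6 * axc * bxe + 6 * axc^2 * bxc + 2 * axd * bxb + 2 * axd * bxb * bxc + 4 * axd * bxd + 4 * axe * bxc + 2 * axf * bxb)" by (metis dvd_add dvd_triv_left)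
  then show ?thesis by simp
qed

lemma modlem: "(L::int) = A + B + D \<Longrightarrow> D mod 2 = 0 \<Longrightarrow> L mod 2 = (A mod 2 + B mod 2) mod 2"
  by presburger

lemma div2_split: "even (u::int) \<Longrightarrow> even v \<Longrightarrow> (u + v + 2 * w) div 2 = u div 2 + v div 2 + w"
  by (elim evenE) simp

lemma ev_pair: "even ((x::int) * (x - 1))"
  using ev2[of x] by (simp add: power2_eq_square algebra_simps)

lemma chi1_add:
  fixes axb axc axd axe axf axg bxb bxc bxd bxe bxf bxg :: int
  shows "((3 * axb * bxc + axb^2 * bxb + 2 * axc * bxb + axd + bxd) + (2 * axb * axc * bxb + 4 * axb * bxd + 3 * axb^2 * bxc + 3 * axc * bxc + 2 * axd * bxb + axe + bxe) + (2 * axb * bxb + axc + bxc) * ((2 * axb * bxb + axc + bxc) - 1) div 2) mod 2 = ((axd + axe + axc * (axc - 1) div 2) mod 2 + (bxd + bxe + bxc * (bxc - 1) div 2) mod 2) mod 2"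
proof -
  have h: "(2 * axb * bxb + axc + bxc) * ((2 * axb * bxb + axc + bxc) - 1) = axc * (axc - 1) + bxc * (bxc - 1) + 2 * (2 * axb^2 * bxb^2 + axc * bxc + 2 * axb * bxb * (axc + bxc) - axb * bxb)"
    by (simp add: algebra_simps power2_eq_square)
  have h2: "(2 * axb * bxb + axc + bxc) * ((2 * axb * bxb + axc + bxc) - 1) div 2 = axc * (axc - 1) div 2 + bxc * (bxc - 1) div 2 + (2 * axb^2 * bxb^2 + axc * bxc + 2 * axb * bxb * (axc + bxc) - axb * bxb)"
    unfolding h by (rule div2_split[OF ev_pair ev_pair])
  have "(3 * axb * bxc + axb^2 * bxb + 2 * axc * bxb + axd + bxd) + (2 * axb * axc * bxb + 4 * axb * bxd + 3 * axb^2 * bxc + 3 * axc * bxc + 2 * axd * bxb + axe + bxe) + (2 * axb * bxb + axc + bxc) * ((2 * axb * bxb + axc + bxc) - 1) div 2 = (axd + axe + axc * (axc - 1) div 2) + (bxd + bxe + bxc * (bxc - 1) div 2) + (4 * axb * axc * bxb - 1 * axb * bxb + 2 * axb * bxb * bxc + 3 * axb * bxc + 4 * axb * bxd + axb^2 * bxb + 2 * axb^2 * bxb^2 + 3 * axb^2 * bxc + 2 * axc * bxb + 4 * axc * bxc + 2 * axd * bxb)"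
    unfolding h2 by (simp add: algebra_simps power2_eq_square)
  moreover have "(4 * axb * axc * bxb - 1 * axb * bxb + 2 * axb * bxb * bxc + 3 * axb * bxc + 4 * axb * bxd + axb^2 * bxb + 2 * axb^2 * bxb^2 + 3 * axb^2 * bxc + 2 * axc * bxb + 4 * axc * bxc + 2 * axd * bxb) mod 2 = 0" by (rule D1_even)
  ultimately show ?thesis by (rule modlem)
qed

lemma chi2_add:
  fixes axb axc axd axe axf axg bxb bxc bxd bxe bxf bxg :: int
  shows "((2 * axb * axc * bxb + 4 * axb * bxd + 3 * axb^2 * bxc + 3 * axc * bxc + 2 * axd * bxb + axe + bxe) + (12 * axb * axc * bxd + 6 * axb * axd * bxc + 2 * axb * axe * bxb + 6 * axb * bxf + 3 * axb^2 * axc * bxc + 10 * axb^2 * bxe + 4 * axb^3 * bxd + 2 * axc * axd * bxb + 5 * axc * bxe + 3 * axc^2 * bxc + 4 * axd * bxd + 3 * axe * bxc + 2 * axf * bxb + axg + bxg) + (2 * axb * bxb + axc + bxc) * (2 * axb * axc * bxb + 4 * axb * bxd + 3 * axb^2 * bxc + 3 * axc * bxc + 2 * axd * bxb + axe + bxe)) mod 2 = ((axe + axg + axc * axe) mod 2 + (bxe + bxg + bxc * bxe) mod 2) mod 2"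
proof -
  have "(2 * axb * axc * bxb + 4 * axb * bxd + 3 * axb^2 * bxc + 3 * axc * bxc + 2 * axd * bxb + axe + bxe) + (12 * axb * axc * bxd + 6 * axb * axd * bxc + 2 * axb * axe * bxb + 6 * axb * bxf + 3 * axb^2 * axc * bxc + 10 * axb^2 * bxe + 4 * axb^3 * bxd + 2 * axc * axd * bxb + 5 * axc * bxe + 3 * axc^2 * bxc + 4 * axd * bxd + 3 * axe * bxc + 2 * axf * bxb + axg + bxg) + (2 * axb * bxb + axc + bxc) * (2 * axb * axc * bxb + 4 * axb * bxd + 3 * axb^2 * bxc + 3 * axc * bxc + 2 * axd * bxb + axe + bxe) = (axe + axg + axc * axe) + (bxe + bxg + bxc * bxe) + (2 * axb * axc * bxb + 8 * axb * axc * bxb * bxc + 16 * axb * axc * bxd + 2 * axb * axc^2 * bxb + 4 * axb * axd * bxb^2 + 6 * axb * axd * bxc + 4 * axb * axe * bxb + 2 * axb * bxb * bxe + 4 * axb * bxc * bxd + 4 * axb * bxd + 6 * axb * bxf + 4 * axb^2 * axc * bxb^2 + 6 * axb^2 * axc * bxc + 8 * axb^2 * bxb * bxd + 3 * axb^2 * bxc + 3 * axb^2 * bxc^2 + 10 * axb^2 * bxe + 6 * axb^3 * bxb * bxc + 4 * axb^3 * bxd + 4 * axc * axd * bxb + 3 * axc * bxc + 3 * axc * bxc^2 + 6 * axc * bxe + 6 * axc^2 * bxc + 2 * axd * bxb + 2 * axd * bxb * bxc + 4 * axd * bxd + 4 * axe * bxc + 2 * axf * bxb)"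
    by (simp add: algebra_simps power2_eq_square power3_eq_cube)
  moreover have "(2 * axb * axc * bxb + 8 * axb * axc * bxb * bxc + 16 * axb * axc * bxd + 2 * axb * axc^2 * bxb + 4 * axb * axd * bxb^2 + 6 * axb * axd * bxc + 4 * axb * axe * bxb + 2 * axb * bxb * bxe + 4 * axb * bxc * bxd + 4 * axb * bxd + 6 * axb * bxf + 4 * axb^2 * axc * bxb^2 + 6 * axb^2 * axc * bxc + 8 * axb^2 * bxb * bxd + 3 * axb^2 * bxc + 3 * axb^2 * bxc^2 + 10 * axb^2 * bxe + 6 * axb^3 * bxb * bxc + 4 * axb^3 * bxd + 4 * axc * axd * bxb + 3 * axc * bxc + 3 * axc * bxc^2 + 6 * axc * bxe + 6 * axc^2 * bxc + 2 * axd * bxb + 2 * axd * bxb * bxc + 4 * axd * bxd + 4 * axe * bxc + 2 * axf * bxb) mod 2 = 0" by (rule D2_even)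
  ultimately show ?thesis by (rule modlem)
qed


definition chi1 :: "int fps \<Rightarrow> int" where
  "chi1 f = (f$4 + f$5 + f$3 * (f$3 - 1) div 2) mod 2"
definition chi2 :: "int fps \<Rightarrow> int" where
  "chi2 f = (f$5 + f$7 + f$3 * f$5) mod 2"

definition Phi :: "int fps \<times> int fps \<Rightarrow> int \<times> int \<times> int \<times> int \<times> int" where
  "Phi x = (fst x $ 1, snd x $ 2, snd x $ 3 - (snd x $ 2)^2, chi1 (snd x), chi2 (snd x))"

abbreviation TT where
  "TT \<equiv> integer_group \<times>\<times> integer_group \<times>\<times> integer_group \<times>\<times> integer_mod_group 2 \<times>\<times> integer_mod_group 2"

lemma group_TT: "group TT"
  by (intro DirProd_group) simp_all

lemma comm_TT: "comm_group TT"
  by (rule group.group_comm_groupI[OF group_TT]) (auto simp: mult_DirProd' integer_group_def add.commute)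

lemma one_TT: "\<one>\<^bsub>TT\<^esub> = (0, 0, 0, 0, 0)"
  by (simp add: integer_group_def)

lemma chi1_mult:
  assumes "f$0 = 0" "f$1 = 1" "h$0 = 0" "h$1 = 1"
  shows "chi1 (h oo f) = (chi1 f + chi1 h) mod 2"
  unfolding chi1_def comp3[OF assms] comp4[OF assms] comp5[OF assms]
  by (rule chi1_add[where axb = "f$2" and axc = "f$3" and axd = "f$4" and axe = "f$5"
        and bxb = "h$2" and bxc = "h$3" and bxd = "h$4" and bxe = "h$5"])

lemma chi2_mult:
  assumes "f$0 = 0" "f$1 = 1" "h$0 = 0" "h$1 = 1"
  shows "chi2 (h oo f) = (chi2 f + chi2 h) mod 2"
  unfolding chi2_def comp3[OF assms] comp5[OF assms] comp7[OF assms]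
  by (rule chi2_add[where axb = "f$2" and axc = "f$3" and axd = "f$4" and axe = "f$5" and axf = "f$6" and axg = "f$7"
        and bxb = "h$2" and bxc = "h$3" and bxd = "h$4" and bxe = "h$5" and bxf = "h$6" and bxg = "h$7"])

lemma Phi_hom: "Phi \<in> hom SR TT"
proof (rule homI)
  fix x assume "x \<in> carrier SR"
  show "Phi x \<in> carrier TT"
    by (simp add: Phi_def carrier_integer_mod_group integer_group_def chi1_def chi2_def)
next
  fix x y assume x: "x \<in> carrier SR" and y: "y \<in> carrier SR"
  define f where "f = snd x"
  define h where "h = snd y"
  have A: "f$0 = 0" "f$1 = 1" "h$0 = 0" "h$1 = 1" using x y by (auto simp: f_def h_def carrier_SR_iff)
  have g1: "fst (x \<otimes>\<^bsub>SR\<^esub> y) $ 1 = fst x $ 1 + fst y $ 1"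
  proof -
    have "(fst y oo snd x) $ 1 = fst y $ 1" using A by (simp add: f_def fps_compose_nth)
    moreover have "(fst y oo snd x) $ 0 = 1" using y by (simp add: carrier_SR_iff)
    ultimately show ?thesis using x by (simp add: SR_mult_eq fps_mult_nth carrier_SR_iff)
  qed
  have s: "snd (x \<otimes>\<^bsub>SR\<^esub> y) = h oo f" by (simp add: SR_mult_eq f_def h_def)
  have c2: "(h oo f) $ 2 = f $ 2 + h $ 2" using comp2[OF A] .
  have c3: "(h oo f) $ 3 = 2 * f$2 * h$2 + f$3 + h$3" using comp3[OF A] .
  show "Phi (x \<otimes>\<^bsub>SR\<^esub> y) = Phi x \<otimes>\<^bsub>TT\<^esub> Phi y"
    unfolding Phi_def s g1 f_def[symmetric] h_def[symmetric]
    using chi1_mult[OF A] chi2_mult[OF A] c2 c3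
    by (simp add: integer_group_def power2_eq_square algebra_simps)
qed

interpretation PH: group_hom SR TT Phi
  by (rule group_hom.intro[OF group_SR group_TT]) (simp add: group_hom_axioms_def Phi_hom)


lemma Phi_comm: "x \<in> carrier SR \<Longrightarrow> y \<in> carrier SR \<Longrightarrow> Phi (comm x y) = \<one>\<^bsub>TT\<^esub>"
proof -
  assume x: "x \<in> carrier SR" and y: "y \<in> carrier SR"
  have CM: "comm_monoid TT" using comm_TT by (simp add: comm_group_def)
  have MM: "monoid TT" using group_TT by (rule group.is_monoid)
  note m_assoc = monoid.m_assoc[OF MM] and m_comm = comm_monoid.m_comm[OF CM]
    and inv_closed = group.inv_closed[OF group_TT] and l_inv = group.l_inv[OF group_TT]
    and r_inv = group.r_inv[OF group_TT] and r_one = monoid.r_one[OF MM] and l_one = monoid.l_one[OF MM]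
  have px: "Phi x \<in> carrier TT" using x by (rule PH.hom_closed)
  have py: "Phi y \<in> carrier TT" using y by (rule PH.hom_closed)
  have "Phi (comm x y) = inv\<^bsub>TT\<^esub> (Phi x) \<otimes>\<^bsub>TT\<^esub> inv\<^bsub>TT\<^esub> (Phi y) \<otimes>\<^bsub>TT\<^esub> Phi x \<otimes>\<^bsub>TT\<^esub> Phi y"
    unfolding comm_def using x y by simp
  also have "\<dots> = \<one>\<^bsub>TT\<^esub>"
  proof -
    have ia: "inv\<^bsub>TT\<^esub> (Phi x) \<in> carrier TT" by (rule inv_closed[OF px])
    have ib: "inv\<^bsub>TT\<^esub> (Phi y) \<in> carrier TT" by (rule inv_closed[OF py])
    have "inv\<^bsub>TT\<^esub> (Phi x) \<otimes>\<^bsub>TT\<^esub> inv\<^bsub>TT\<^esub> (Phi y) \<otimes>\<^bsub>TT\<^esub> Phi x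
        = inv\<^bsub>TT\<^esub> (Phi x) \<otimes>\<^bsub>TT\<^esub> (inv\<^bsub>TT\<^esub> (Phi y) \<otimes>\<^bsub>TT\<^esub> Phi x)"
      by (rule m_assoc[OF ia ib px])
    also have "\<dots> = inv\<^bsub>TT\<^esub> (Phi x) \<otimes>\<^bsub>TT\<^esub> (Phi x \<otimes>\<^bsub>TT\<^esub> inv\<^bsub>TT\<^esub> (Phi y))"
      by (simp only: m_comm[OF ib px])
    also have "\<dots> = (inv\<^bsub>TT\<^esub> (Phi x) \<otimes>\<^bsub>TT\<^esub> Phi x) \<otimes>\<^bsub>TT\<^esub> inv\<^bsub>TT\<^esub> (Phi y)"
      by (rule m_assoc[OF ia px ib, symmetric])
    also have "\<dots> = inv\<^bsub>TT\<^esub> (Phi y)" by (simp only: l_inv[OF px] l_one[OF ib])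
    finally have "inv\<^bsub>TT\<^esub> (Phi x) \<otimes>\<^bsub>TT\<^esub> inv\<^bsub>TT\<^esub> (Phi y) \<otimes>\<^bsub>TT\<^esub> Phi x = inv\<^bsub>TT\<^esub> (Phi y)" .
    then show ?thesis by (simp only: l_inv[OF py])
  qed
  finally show ?thesis .
qed

lemma SR_comm_ker: "SR_comm \<subseteq> kernel SR TT Phi"
  unfolding SR_comm_def
proof (rule G.generate_subgroup_incl)
  show "subgroup (kernel SR TT Phi) SR" by (rule PH.subgroup_kernel)
  show "{inv\<^bsub>SR\<^esub> x \<otimes>\<^bsub>SR\<^esub> inv\<^bsub>SR\<^esub> y \<otimes>\<^bsub>SR\<^esub> x \<otimes>\<^bsub>SR\<^esub> y |x y. x \<in> carrier SR \<and> y \<in> carrier SR} \<subseteq> kernel SR TT Phi"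
    using Phi_comm unfolding comm_def kernel_def by auto
qed

lemma ker_iff: "x \<in> kernel SR TT Phi \<longleftrightarrow> x \<in> carrier SR \<and> Phi x = (0,0,0,0,0)"
  by (simp add: kernel_def one_TT)

lemma Phi_eqn: "eqn 7 x y \<Longrightarrow> Phi x = Phi y"
  by (simp add: eqn_def agree_def Phi_def chi1_def chi2_def)

lemma goodf_one: "n \<ge> 1 \<Longrightarrow> goodf n 0 \<one>\<^bsub>SR\<^esub>"
  using SR_comm_one G.one_closed by (simp add: goodf_def SR_one_eq)

lemma goodf_all:
  assumes n: "n \<ge> 1" and h: "n + 1 \<ge> 4 \<or> c = 0" and e: "odd (n+1) \<and> n+1 \<le> 7 \<longrightarrow> even c"
  shows "\<exists>w. goodf n c w"
proof (cases "c = 0")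
  case True then show ?thesis using goodf_one[OF n] by blast
next
  case False
  then have n4: "n + 1 \<ge> 4" using h by simp
  show ?thesis
  proof (cases "even (n+1)")
    case True
    obtain k where k: "n + 1 = 2 * k" by (rule evenE[OF True])
    define m where "m = k - 1"
    have m: "n = 2*m+1" using k n by (simp add: m_def)
    have "m \<ge> 1" using n4 m by simp
    then obtain w where w: "w \<in> SR_comm \<and> w \<in> carrier SR \<and> fst w = 1 \<and> eqn (2*m+1) w \<one>\<^bsub>SR\<^esub> \<and> snd w $ (2*m+2) = c"
      using famO[of m c] by blast
    have "goodf n c w" unfolding goodf_def using w m by (simp add: add.commute)
    then show ?thesis by blast
  next
    case odd: False
    show ?thesis
    proof (cases "n + 1 \<le> 7")
      case True
      then obtain d where d: "c = 2 * d" using e odd by (auto elim: evenE)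
      have "even n" using odd by simp
      then obtain k where k: "n = 2 * k" by (rule evenE)
      define m where "m = k - 1"
      have m: "n = 2*m+2" using k n by (simp add: m_def)
      have "m \<ge> 1" using n4 m by simp
      then obtain w where w: "w \<in> SR_comm \<and> w \<in> carrier SR \<and> fst w = 1 \<and> eqn (2*m+2) w \<one>\<^bsub>SR\<^esub> \<and> snd w $ (2*m+3) = 2 * d"
        using famE[of m d] by blast
      have e3: "n + 1 = 2*m+3" using m by simp
      have "goodf n c w" unfolding goodf_def e3 using w m d by simp
      then show ?thesis by blast
    next
      case False
      then have n9: "n + 1 \<ge> 9" using odd by presburger
      show ?thesis
      proof (cases "(n+1) mod 4 = 1")
        case True
        define s where "s = (n - 8) div 4"
        have "n = 4*s+8" using True n9 unfolding s_def by presburger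
        then show ?thesis using famA[of s c] by simp
      next
        case False
        define s where "s = (n - 10) div 4"
        have "n = 4*s+10" using False n9 odd unfolding s_def by presburger
        then show ?thesis using famB[of s c] by simp
      qed
    qed
  qed
qed

lemma Phi_zero:
  assumes "z \<in> kernel SR TT Phi"
  shows "fst z $ 1 = 0" "snd z $ 2 = 0" "snd z $ 3 = (snd z $ 2)^2" "chi1 (snd z) = 0" "chi2 (snd z) = 0"
  using assms by (auto simp: ker_iff Phi_def)

lemma step:
  assumes z: "z \<in> kernel SR TT Phi" and e: "eqn n z \<one>\<^bsub>SR\<^esub>"
  shows "\<exists>w\<in>SR_comm. eqn (Suc n) z w"
proof (cases "n = 0")
  case True
  have zc: "z \<in> carrier SR" using z by (simp add: ker_iff)
  have "eqn (Suc 0) z \<one>\<^bsub>SR\<^esub>"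
    using zc Phi_zero(1)[OF z] unfolding eqn_def agree_def SR_one_eq
    by (auto simp: carrier_SR_iff le_Suc_eq)
  then show ?thesis using True SR_comm_one by blast
next
  case False
  then have n: "n \<ge> 1" by simp
  have zc: "z \<in> carrier SR" using z by (simp add: ker_iff)
  note PZ = Phi_zero[OF z]
  define cf where "cf = snd z $ (n+1)"
  have c1: "n + 1 \<ge> 4 \<or> cf = 0"
  proof (cases "n + 1 \<ge> 4")
    case False
    then have "n = 1 \<or> n = 2" using n by auto
    then show ?thesis
    proof
      assume "n = 1" then show ?thesis using PZ by (simp add: cf_def numeral_2_eq_2)
    next
      assume n2: "n = 2"
      have "snd z $ 2 = 0" using PZ by simp
      then show ?thesis using PZ n2 by (simp add: cf_def)
    qed
  qed simp
  have c2: "odd (n+1) \<and> n+1 \<le> 7 \<longrightarrow> even cf"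
  proof
    assume a: "odd (n+1) \<and> n+1 \<le> 7"
    then have "n = 2 \<or> n = 4 \<or> n = 6" using n by presburger
    then show "even cf"
    proof (elim disjE)
      assume "n = 2" then show ?thesis using PZ by (simp add: cf_def)
    next
      assume n4: "n = 4"
      have "snd z $ 3 = 0" "snd z $ 4 = 0" using eqn_one_snd[OF e, of 3] eqn_one_snd[OF e, of 4] n4 by simp_all
      then show ?thesis using PZ(4) n4 by (simp add: cf_def chi1_def even_iff_mod_2_eq_zero)
    next
      assume n6: "n = 6"
      have "snd z $ 3 = 0" "snd z $ 5 = 0" using eqn_one_snd[OF e, of 3] eqn_one_snd[OF e, of 5] n6 by simp_all
      then show ?thesis using PZ(5) n6 by (simp add: cf_def chi2_def even_iff_mod_2_eq_zero)
    qed
  qed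
  obtain wf where wf: "goodf n cf wf" using goodf_all[OF n c1 c2] by blast
  obtain wg where wg: "wg \<in> SR_comm" "wg \<in> carrier SR" "eqn n wg \<one>\<^bsub>SR\<^esub>"
      "fst wg $ (n+1) = fst z $ (n+1)" "snd wg $ (n+1) = 0"
    using famG[OF n, of "fst z $ (n+1)"] by blast
  have wf': "wf \<in> SR_comm" "wf \<in> carrier SR" "eqn n wf \<one>\<^bsub>SR\<^esub>" "fst wf $ (n+1) = 0" "snd wf $ (n+1) = cf"
    using wf by (simp_all add: goodf_def)
  note M = mult_lead[OF wg(2) wf'(2) wf'(3) n]
  define w where "w = wg \<otimes>\<^bsub>SR\<^esub> wf"
  have wc: "w \<in> SR_comm" using wg wf' by (simp add: w_def SR_comm_mult)
  have we: "eqn n w \<one>\<^bsub>SR\<^esub>" using eqn_trans[OF M(1) wg(3)] by (simp add: w_def)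
  have w1: "fst w $ (n+1) = fst z $ (n+1)" using M(2) wg(4) wf'(4) by (simp add: w_def)
  have w2: "snd w $ (n+1) = snd z $ (n+1)" using M(3) wg(5) wf'(5) by (simp add: w_def cf_def)
  have "eqn (Suc n) z w"
    using e we w1 w2 unfolding eqn_def agree_def SR_one_eq by (auto simp: le_Suc_eq)
  then show ?thesis using wc by blast
qed

lemma ker_subgroup: "subgroup (kernel SR TT Phi) SR" by (rule PH.subgroup_kernel)

lemma dense:
  assumes x: "x \<in> kernel SR TT Phi"
  shows "\<exists>y\<in>SR_comm. eqn n x y"
proof (induction n)
  case 0
  have "x \<in> carrier SR" using x by (simp add: ker_iff)
  then have "eqn 0 x \<one>\<^bsub>SR\<^esub>" by (simp add: eqn_def agree_def SR_one_eq carrier_SR_iff)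
  then show ?case using SR_comm_one by blast
next
  case (Suc n)
  then obtain y where y: "y \<in> SR_comm" "eqn n x y" by blast
  have xc: "x \<in> carrier SR" using x by (simp add: ker_iff)
  have yc: "y \<in> carrier SR" using y by (simp add: SR_comm_carrier)
  have yk: "y \<in> kernel SR TT Phi" using y SR_comm_ker by blast
  define z where "z = inv\<^bsub>SR\<^esub> y \<otimes>\<^bsub>SR\<^esub> x"
  have zk: "z \<in> kernel SR TT Phi" unfolding z_def
    using ker_subgroup yk x by (simp add: subgroup.m_closed subgroup.m_inv_closed)
  have "eqn n z (inv\<^bsub>SR\<^esub> y \<otimes>\<^bsub>SR\<^esub> y)" unfolding z_def
    by (rule eqn_mult[OF eqn_refl y(2)])
  then have ze: "eqn n z \<one>\<^bsub>SR\<^esub>" using yc by simp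
  obtain w where w: "w \<in> SR_comm" "eqn (Suc n) z w" using step[OF zk ze] by blast
  have "x = y \<otimes>\<^bsub>SR\<^esub> z" using xc yc by (simp add: z_def G.m_assoc[symmetric])
  then have "eqn (Suc n) x (y \<otimes>\<^bsub>SR\<^esub> w)" using eqn_mult[OF eqn_refl w(2), of y] by simp
  moreover have "y \<otimes>\<^bsub>SR\<^esub> w \<in> SR_comm" using y w by (simp add: SR_comm_mult)
  ultimately show ?case by blast
qed

lemma ker_eq: "kernel SR TT Phi = SR_top_comm"
proof
  show "kernel SR TT Phi \<subseteq> SR_top_comm"
  proof
    fix x assume x: "x \<in> kernel SR TT Phi"
    define s where "s k = (SOME y. y \<in> SR_comm \<and> eqn k x y)" for k
    have s: "s k \<in> SR_comm \<and> eqn k x (s k)" for k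
      unfolding s_def by (rule someI_ex) (use dense[OF x, of k] in blast)
    have "tadic_conv s x"
      unfolding tadic_conv_def
    proof
      fix n
      show "\<exists>K. \<forall>k\<ge>K. \<forall>i\<le>n. fst (s k) $ i = fst x $ i \<and> snd (s k) $ i = snd x $ i"
      proof (intro exI[of _ n] allI impI)
        fix k i assume "n \<le> k" "i \<le> n"
        then have "i \<le> k" by simp
        then show "fst (s k) $ i = fst x $ i \<and> snd (s k) $ i = snd x $ i"
          using s[of k] unfolding eqn_def agree_def by simp
      qed
    qed
    then show "x \<in> SR_top_comm" unfolding SR_top_comm_def using s by blast
  qed
next
  show "SR_top_comm \<subseteq> kernel SR TT Phi"
  proof
    fix x assume "x \<in> SR_top_comm"
    then obtain s where s: "\<And>k. s k \<in> SR_comm" and t: "tadic_conv s x"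
      unfolding SR_top_comm_def by blast
    obtain K where K: "\<And>k i. k \<ge> K \<Longrightarrow> i \<le> 7 \<Longrightarrow> fst (s k) $ i = fst x $ i \<and> snd (s k) $ i = snd x $ i"
      using t unfolding tadic_conv_def by meson
    have e: "eqn 7 (s K) x" using K[of K] by (simp add: eqn_def agree_def)
    have sk: "s K \<in> kernel SR TT Phi" using s SR_comm_ker by blast
    have skc: "s K \<in> carrier SR" using sk by (simp add: ker_iff)
    have xc: "x \<in> carrier SR"
    proof -
      have "fst (s K) $ 0 = fst x $ 0" "snd (s K) $ 0 = snd x $ 0" "snd (s K) $ 1 = snd x $ 1"
        using K[of K] by auto
      then show ?thesis using skc by (simp add: carrier_SR_iff)
    qed
    have "Phi x = Phi (s K)" using Phi_eqn[OF e] by simp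
    then show "x \<in> kernel SR TT Phi" using sk xc by (simp add: ker_iff)
  qed
qed

lemma Phi_surj: "Phi ` carrier SR = carrier TT"
proof
  show "Phi ` carrier SR \<subseteq> carrier TT" using PH.hom_closed by blast
next
  show "carrier TT \<subseteq> Phi ` carrier SR"
  proof
    fix t assume t: "t \<in> carrier TT"
    obtain a b c d e where te: "t = (a, b, c, d, e)" by (cases t) auto
    have d: "0 \<le> d" "d < 2" and e: "0 \<le> e" "e < 2"
      using t by (auto simp: te carrier_integer_mod_group)
    define c3 where "c3 = c + b^2"
    define g :: "int fps" where "g = 1 + fps_const a * fps_X"
    define f :: "int fps" where "f = fps_X + fps_const b * fps_X^2 + fps_const c3 * fps_X^3
       + fps_const (d - c3 * (c3 - 1) div 2) * fps_X^4 + fps_const e * fps_X^7"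
    have fc: "f $ 0 = 0" "f $ 1 = 1" "f $ 2 = b" "f $ 3 = c3" "f $ 4 = d - c3 * (c3 - 1) div 2"
      "f $ 5 = 0" "f $ 7 = e" by (simp_all add: f_def)
    have gc: "g $ 0 = 1" "g $ 1 = a" by (simp_all add: g_def)
    have xc: "(g, f) \<in> carrier SR" using fc gc by (simp add: carrier_SR_iff)
    have "Phi (g, f) = t"
      unfolding Phi_def te using fc gc d e by (simp add: chi1_def chi2_def c3_def)
    then show "t \<in> Phi ` carrier SR" using xc by force
  qed
qed

theorem corollary4:
  fixes g f :: "int fps"
  assumes "(g, f) \<in> carrier SR"
  shows "((g, f) \<in> SR_top_comm \<longleftrightarrow>
            fps_nth g 1 = 0 \<and> fps_nth f 2 = 0 \<and> fps_nth f 3 = 0 \<and>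
            fps_nth f 4 mod 2 = fps_nth f 5 mod 2 \<and> fps_nth f 5 mod 2 = fps_nth f 7 mod 2)
         \<and> (SR Mod SR_top_comm \<cong>
             integer_group \<times>\<times> integer_group \<times>\<times> integer_group \<times>\<times>
             integer_mod_group 2 \<times>\<times> integer_mod_group 2)"
proof
  have "(g, f) \<in> SR_top_comm \<longleftrightarrow> Phi (g, f) = (0,0,0,0,0)"
    using assms by (simp add: ker_eq[symmetric] ker_iff)
  also have "\<dots> \<longleftrightarrow> g $ 1 = 0 \<and> f $ 2 = 0 \<and> f $ 3 = 0 \<and> f $ 4 mod 2 = f $ 5 mod 2 \<and> f $ 5 mod 2 = f $ 7 mod 2"
  proof
    assume "Phi (g, f) = (0,0,0,0,0)"
    then have h: "g $ 1 = 0" "f $ 2 = 0" "f $ 3 - (f $ 2)^2 = 0" "chi1 f = 0" "chi2 f = 0"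
      by (simp_all add: Phi_def)
    then have f3: "f $ 3 = 0" by simp
    have "(f$4 + f$5) mod 2 = 0" using h(4) f3 by (simp add: chi1_def)
    moreover have "(f$5 + f$7) mod 2 = 0" using h(5) f3 by (simp add: chi2_def)
    ultimately show "g $ 1 = 0 \<and> f $ 2 = 0 \<and> f $ 3 = 0 \<and> f $ 4 mod 2 = f $ 5 mod 2 \<and> f $ 5 mod 2 = f $ 7 mod 2"
      using h f3 by presburger
  next
    assume h: "g $ 1 = 0 \<and> f $ 2 = 0 \<and> f $ 3 = 0 \<and> f $ 4 mod 2 = f $ 5 mod 2 \<and> f $ 5 mod 2 = f $ 7 mod 2"
    then have "(f$4 + f$5) mod 2 = 0" "(f$5 + f$7) mod 2 = 0" by presburger+
    then show "Phi (g, f) = (0,0,0,0,0)" using h by (simp add: Phi_def chi1_def chi2_def)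
  qed
  finally show "(g, f) \<in> SR_top_comm \<longleftrightarrow>
            fps_nth g 1 = 0 \<and> fps_nth f 2 = 0 \<and> fps_nth f 3 = 0 \<and>
            fps_nth f 4 mod 2 = fps_nth f 5 mod 2 \<and> fps_nth f 5 mod 2 = fps_nth f 7 mod 2" .
next
  show "SR Mod SR_top_comm \<cong>
             integer_group \<times>\<times> integer_group \<times>\<times> integer_group \<times>\<times>
             integer_mod_group 2 \<times>\<times> integer_mod_group 2"
    using PH.FactGroup_iso[OF Phi_surj] by (simp add: ker_eq)
qed


end
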